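(* Let $(G,\Phi)$ be a self-replicating contracting self-similar group of degree $d$ with $G$ finitely generated, and let $G_0=G_0^{un}/H$ be a standard contracting cover with epimorphism $\pi:G_0\to G$ induced by $\pi^{un}$. Then $\varphi^{un}$ induces a homomorphism $\varphi_1:G_0\to G_0\wr S_d$ such that the self-similar group $(G_0,\varphi_1)$ is contracting and self-replicating with nucleus (the image of) $S$, and $\widehat\pi\circ\varphi_1=\Phi\circ\pi$, where $\widehat\pi:G_0\wr S_d\to G\wr S_d$, $((k_x)_{x\in X},\tau)\mapsto((\pi(k_x))_{x\in X},\tau)$.
   Context: Self-similar groups: fix $d\ge 2$, $X=\{0,\dots,d-1\}$, $S_d$ the symmetric group of $X$ acting from the right. $G\wr S_d=G^X\rtimes S_d$ has elements $((g_x)_{x\in X},\tau)$ and product $((g_x),\tau)((g'_x),\tau')=((g_xg'_{x\tau}),\tau\tau')$. A self-similar group of degree $d$ is $(G,\Phi)$ with $\Phi:G\to G\wr S_d$ a homomorphism, $\Phi(g)=((g_x)_x,\tau_g)$. On the set $X^*$ of finite words, define a right action and sections by: empty word fixed, $(xw)g=(x\tau_g)(w\,g_x)$, $g_\emptyset=g$, $g_{xw}=(g_x)_w$. Contracting: there is finite $\mathcal M\subset G$ such that every $g$ has $g_v\in\mathcal M$ for all $v$ of length $\ge k(g)$; the nucleus $\mathcal N$ is the smallest such set. Self-replicating: for all $g\in G$, $x\in X$ there is $h$ with $xh=x$, $h_x=g$. Universal contracting cover: $\mathcal N=\{n_1,\dots,n_\ell\}$, $\Phi(n_i)=((n_{i(x)})_x,\tau_i)$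 (sections of nucleus elements are in $\mathcal N$); $S=\{s_1,\dots,s_\ell\}$; $R$ = words $s_i$ (if $n_i=1$), $s_is_j$ (if $n_in_j=1$), $s_is_js_k$ (if $n_in_jn_k=1$); $G_0^{un}=\langle S\mid R\rangle$, $\pi^{un}(s_i)=n_i$ (an epimorphism); $\varphi^{un}:G_0^{un}\to G_0^{un}\wr S_d$ the homomorphism extending $s_i\mapsto((s_{i(x)})_x,\tau_i)$. Standard contracting cover: for $x\in X$, $n_i\in\mathcal N$ choose $g(x,n_i)\in G$ with $x\,g(x,n_i)=x$, $g(x,n_i)_x=n_i$; choose $h(x,n_i)\in G_0^{un}$ with $\pi^{un}(h(x,n_i))=g(x,n_i)$; put $w(x,n_i)=h(x,n_i)_xs_i^{-1}$ (section w.r.t. $\varphi^{un}$); $E=\{w(x,n_i)_v:x\in X,n_i\in\mathcal N,v\in X^*\}$ (finite); $H$ = normal closure of $E$ in $G_0^{un}$; $G_0=G_0^{un}/H$. *)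

theory Defs
  imports "HOL-Algebra.Algebra" "HOL-Combinatorics.Permutations"
begin

text \<open>A permutation tau of X is a function permuting {0..<d}; the right action
  is x tau = tau x, so the product tau tau' (first tau, then tau') is the function tau' o tau.\<close>

definition wreath :: "('a,'b) monoid_scheme \<Rightarrow> nat \<Rightarrow> ((nat \<Rightarrow> 'a) \<times> (nat \<Rightarrow> nat)) monoid" where
  "wreath G d = \<lparr> carrier = (Pi\<^sub>E {0..<d} (\<lambda>_. carrier G)) \<times> {\<tau>. \<tau> permutes {0..<d}},
     monoid.mult = (\<lambda>a b. ((\<lambda>x\<in>{0..<d}. fst a x \<otimes>\<^bsub>G\<^esub> fst b (snd a x)), snd b \<circ> snd a)),
     one = ((\<lambda>x\<in>{0..<d}. \<one>\<^bsub>G\<^esub>), id) \<rparr>"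

definition self_similar :: "('a,'b) monoid_scheme \<Rightarrow> nat \<Rightarrow> ('a \<Rightarrow> (nat \<Rightarrow> 'a) \<times> (nat \<Rightarrow> nat)) \<Rightarrow> bool" where
  "self_similar G d \<Phi> \<longleftrightarrow> group G \<and> \<Phi> \<in> hom G (wreath G d)"

fun act :: "('a \<Rightarrow> (nat \<Rightarrow> 'a) \<times> (nat \<Rightarrow> nat)) \<Rightarrow> 'a \<Rightarrow> nat list \<Rightarrow> nat list" where
  "act \<Phi> g [] = []"
| "act \<Phi> g (x # w) = snd (\<Phi> g) x # act \<Phi> (fst (\<Phi> g) x) w"

fun sect :: "('a \<Rightarrow> (nat \<Rightarrow> 'a) \<times> (nat \<Rightarrow> nat)) \<Rightarrow> 'a \<Rightarrow> nat list \<Rightarrow> 'a" where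
  "sect \<Phi> g [] = g"
| "sect \<Phi> g (x # w) = sect \<Phi> (fst (\<Phi> g) x) w"

definition words :: "nat \<Rightarrow> nat list set" where
  "words d = {v. set v \<subseteq> {0..<d}}"

definition contracting_set :: "('a,'b) monoid_scheme \<Rightarrow> nat \<Rightarrow> ('a \<Rightarrow> (nat \<Rightarrow> 'a) \<times> (nat \<Rightarrow> nat)) \<Rightarrow> 'a set \<Rightarrow> bool" where
  "contracting_set G d \<Phi> M \<longleftrightarrow> finite M \<and> M \<subseteq> carrier G \<and>
     (\<forall>g\<in>carrier G. \<exists>k. \<forall>v\<in>words d. length v \<ge> k \<longrightarrow> sect \<Phi> g v \<in> M)"

definition contracting :: "('a,'b) monoid_scheme \<Rightarrow> nat \<Rightarrow> ('a \<Rightarrow> (nat \<Rightarrow> 'a) \<times> (nat \<Rightarrow> nat)) \<Rightarrow> bool" where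
  "contracting G d \<Phi> \<longleftrightarrow> (\<exists>M. contracting_set G d \<Phi> M)"

definition is_nucleus :: "('a,'b) monoid_scheme \<Rightarrow> nat \<Rightarrow> ('a \<Rightarrow> (nat \<Rightarrow> 'a) \<times> (nat \<Rightarrow> nat)) \<Rightarrow> 'a set \<Rightarrow> bool" where
  "is_nucleus G d \<Phi> N \<longleftrightarrow> contracting_set G d \<Phi> N \<and> (\<forall>M. contracting_set G d \<Phi> M \<longrightarrow> N \<subseteq> M)"

definition self_replicating :: "('a,'b) monoid_scheme \<Rightarrow> nat \<Rightarrow> ('a \<Rightarrow> (nat \<Rightarrow> 'a) \<times> (nat \<Rightarrow> nat)) \<Rightarrow> bool" where
  "self_replicating G d \<Phi> \<longleftrightarrow>
     (\<forall>g\<in>carrier G. \<forall>x<d. \<exists>h\<in>carrier G. snd (\<Phi> h) x = x \<and> fst (\<Phi> h) x = g)"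

definition finitely_generated :: "('a,'b) monoid_scheme \<Rightarrow> bool" where
  "finitely_generated G \<longleftrightarrow> (\<exists>A. finite A \<and> A \<subseteq> carrier G \<and> generate G A = carrier G)"

definition normal_closure :: "('a,'b) monoid_scheme \<Rightarrow> 'a set \<Rightarrow> 'a set" where
  "normal_closure G E = generate G (\<Union>g\<in>carrier G. (\<lambda>e. g \<otimes>\<^bsub>G\<^esub> e \<otimes>\<^bsub>G\<^esub> inv\<^bsub>G\<^esub> g) ` E)"

text \<open>Words in the generators s_0..s_{l-1}: a letter (i, True) is s_i, (i, False) is s_i^{-1}.\<close>
type_synonym gword = "(nat \<times> bool) list"

definition valid_word :: "nat \<Rightarrow> gword \<Rightarrow> bool" where
  "valid_word l w \<longleftrightarrow> set w \<subseteq> {0..<l} \<times> UNIV"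

inductive pres_eq :: "nat \<Rightarrow> gword set \<Rightarrow> gword \<Rightarrow> gword \<Rightarrow> bool" for l R where
  refl: "valid_word l w \<Longrightarrow> pres_eq l R w w"
| sym: "pres_eq l R u v \<Longrightarrow> pres_eq l R v u"
| trans: "pres_eq l R u v \<Longrightarrow> pres_eq l R v w \<Longrightarrow> pres_eq l R u w"
| free: "valid_word l u \<Longrightarrow> valid_word l v \<Longrightarrow> i < l \<Longrightarrow>
           pres_eq l R (u @ [(i,b),(i,\<not> b)] @ v) (u @ v)"
| rel: "valid_word l u \<Longrightarrow> valid_word l v \<Longrightarrow> r \<in> R \<Longrightarrow> valid_word l r \<Longrightarrow>
           pres_eq l R (u @ r @ v) (u @ v)"

definition pres_class :: "nat \<Rightarrow> gword set \<Rightarrow> gword \<Rightarrow> gword set" where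
  "pres_class l R w = {w'. pres_eq l R w w'}"

definition presented_group :: "nat \<Rightarrow> gword set \<Rightarrow> gword set monoid" where
  "presented_group l R = \<lparr> carrier = pres_class l R ` {w. valid_word l w},
     monoid.mult = (\<lambda>A B. pres_class l R ((SOME a. a \<in> A) @ (SOME b. b \<in> B))),
     one = pres_class l R [] \<rparr>"

definition pres_gen :: "nat \<Rightarrow> gword set \<Rightarrow> nat \<Rightarrow> gword set" where
  "pres_gen l R i = pres_class l R [(i, True)]"

definition word_eval :: "('c,'e) monoid_scheme \<Rightarrow> (nat \<Rightarrow> 'c) \<Rightarrow> gword \<Rightarrow> 'c" where
  "word_eval K f w = foldr (\<lambda>(i,b) acc. (if b then f i else inv\<^bsub>K\<^esub> (f i)) \<otimes>\<^bsub>K\<^esub> acc) w \<one>\<^bsub>K\<^esub>"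

definition pres_map :: "('c,'e) monoid_scheme \<Rightarrow> (nat \<Rightarrow> 'c) \<Rightarrow> gword set \<Rightarrow> 'c" where
  "pres_map K f A = word_eval K f (SOME w. w \<in> A)"

text \<open>The nucleus is enumerated as n 0, ..., n (l-1). nidx i x is the index i(x) with
  n_{i(x)} the section of n_i at x.\<close>
definition nidx :: "('a \<Rightarrow> (nat \<Rightarrow> 'a) \<times> (nat \<Rightarrow> nat)) \<Rightarrow> (nat \<Rightarrow> 'a) \<Rightarrow> nat \<Rightarrow> nat \<Rightarrow> nat \<Rightarrow> nat" where
  "nidx \<Phi> n l i x = (THE j. j < l \<and> n j = fst (\<Phi> (n i)) x)"

definition un_relators :: "('a,'b) monoid_scheme \<Rightarrow> (nat \<Rightarrow> 'a) \<Rightarrow> nat \<Rightarrow> gword set" where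
  "un_relators G n l =
     {[(i,True)] | i. i < l \<and> n i = \<one>\<^bsub>G\<^esub>}
   \<union> {[(i,True),(j,True)] | i j. i < l \<and> j < l \<and> n i \<otimes>\<^bsub>G\<^esub> n j = \<one>\<^bsub>G\<^esub>}
   \<union> {[(i,True),(j,True),(k,True)] | i j k. i < l \<and> j < l \<and> k < l \<and>
        n i \<otimes>\<^bsub>G\<^esub> n j \<otimes>\<^bsub>G\<^esub> n k = \<one>\<^bsub>G\<^esub>}"

definition G0un :: "('a,'b) monoid_scheme \<Rightarrow> (nat \<Rightarrow> 'a) \<Rightarrow> nat \<Rightarrow> gword set monoid" where
  "G0un G n l = presented_group l (un_relators G n l)"

definition s_un :: "('a,'b) monoid_scheme \<Rightarrow> (nat \<Rightarrow> 'a) \<Rightarrow> nat \<Rightarrow> nat \<Rightarrow> gword set" where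
  "s_un G n l i = pres_gen l (un_relators G n l) i"

definition pi_un :: "('a,'b) monoid_scheme \<Rightarrow> (nat \<Rightarrow> 'a) \<Rightarrow> gword set \<Rightarrow> 'a" where
  "pi_un G n = pres_map G n"

definition phi_un :: "('a,'b) monoid_scheme \<Rightarrow> nat \<Rightarrow> ('a \<Rightarrow> (nat \<Rightarrow> 'a) \<times> (nat \<Rightarrow> nat)) \<Rightarrow> (nat \<Rightarrow> 'a) \<Rightarrow> nat
    \<Rightarrow> gword set \<Rightarrow> (nat \<Rightarrow> gword set) \<times> (nat \<Rightarrow> nat)" where
  "phi_un G d \<Phi> n l = pres_map (wreath (G0un G n l) d)
     (\<lambda>i. ((\<lambda>x\<in>{0..<d}. s_un G n l (nidx \<Phi> n l i x)), snd (\<Phi> (n i))))"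

text \<open>h x i is the chosen element h(x, n_i) of G0un.\<close>
definition E_set :: "('a,'b) monoid_scheme \<Rightarrow> nat \<Rightarrow> ('a \<Rightarrow> (nat \<Rightarrow> 'a) \<times> (nat \<Rightarrow> nat)) \<Rightarrow> (nat \<Rightarrow> 'a) \<Rightarrow> nat
    \<Rightarrow> (nat \<Rightarrow> nat \<Rightarrow> gword set) \<Rightarrow> gword set set" where
  "E_set G d \<Phi> n l h =
     {sect (phi_un G d \<Phi> n l)
        (sect (phi_un G d \<Phi> n l) (h x i) [x] \<otimes>\<^bsub>G0un G n l\<^esub> inv\<^bsub>G0un G n l\<^esub> (s_un G n l i)) v
      | x i v. x < d \<and> i < l \<and> v \<in> words d}"

definition H_std :: "('a,'b) monoid_scheme \<Rightarrow> nat \<Rightarrow> ('a \<Rightarrow> (nat \<Rightarrow> 'a) \<times> (nat \<Rightarrow> nat)) \<Rightarrow> (nat \<Rightarrow> 'a) \<Rightarrow> nat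
    \<Rightarrow> (nat \<Rightarrow> nat \<Rightarrow> gword set) \<Rightarrow> gword set set" where
  "H_std G d \<Phi> n l h = normal_closure (G0un G n l) (E_set G d \<Phi> n l h)"

definition G0_std :: "('a,'b) monoid_scheme \<Rightarrow> nat \<Rightarrow> ('a \<Rightarrow> (nat \<Rightarrow> 'a) \<times> (nat \<Rightarrow> nat)) \<Rightarrow> (nat \<Rightarrow> 'a) \<Rightarrow> nat
    \<Rightarrow> (nat \<Rightarrow> nat \<Rightarrow> gword set) \<Rightarrow> gword set set monoid" where
  "G0_std G d \<Phi> n l h = G0un G n l Mod H_std G d \<Phi> n l h"

definition pi_std :: "('a,'b) monoid_scheme \<Rightarrow> (nat \<Rightarrow> 'a) \<Rightarrow> gword set set \<Rightarrow> 'a" where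
  "pi_std G n C = pi_un G n (SOME a. a \<in> C)"

definition quot_wr :: "('a,'b) monoid_scheme \<Rightarrow> nat \<Rightarrow> ('a \<Rightarrow> (nat \<Rightarrow> 'a) \<times> (nat \<Rightarrow> nat)) \<Rightarrow> (nat \<Rightarrow> 'a) \<Rightarrow> nat
    \<Rightarrow> (nat \<Rightarrow> nat \<Rightarrow> gword set) \<Rightarrow> (nat \<Rightarrow> gword set) \<times> (nat \<Rightarrow> nat) \<Rightarrow> (nat \<Rightarrow> gword set set) \<times> (nat \<Rightarrow> nat)" where
  "quot_wr G d \<Phi> n l h = (\<lambda>(k,\<tau>). ((\<lambda>x\<in>{0..<d}. H_std G d \<Phi> n l h #>\<^bsub>G0un G n l\<^esub> k x), \<tau>))"

definition phi_1 :: "('a,'b) monoid_scheme \<Rightarrow> nat \<Rightarrow> ('a \<Rightarrow> (nat \<Rightarrow> 'a) \<times> (nat \<Rightarrow> nat)) \<Rightarrow> (nat \<Rightarrow> 'a) \<Rightarrow> nat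
    \<Rightarrow> (nat \<Rightarrow> nat \<Rightarrow> gword set) \<Rightarrow> gword set set \<Rightarrow> (nat \<Rightarrow> gword set set) \<times> (nat \<Rightarrow> nat)" where
  "phi_1 G d \<Phi> n l h C = quot_wr G d \<Phi> n l h (phi_un G d \<Phi> n l (SOME a. a \<in> C))"

definition wr_map :: "nat \<Rightarrow> ('c \<Rightarrow> 'a) \<Rightarrow> (nat \<Rightarrow> 'c) \<times> (nat \<Rightarrow> nat) \<Rightarrow> (nat \<Rightarrow> 'a) \<times> (nat \<Rightarrow> nat)" where
  "wr_map d p = (\<lambda>(k,\<tau>). ((\<lambda>x\<in>{0..<d}. p (k x)), \<tau>))"

end

theory Submission imports Defs begin

section \<open>Wreath product is a group\<close>

lemma wreath_carrier: "carrier (wreath K d) = (Pi\<^sub>E {0..<d} (\<lambda>_. carrier K)) \<times> {\<tau>. \<tau> permutes {0..<d}}"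
  by (simp add: wreath_def)

lemma wreath_mult: "a \<otimes>\<^bsub>wreath K d\<^esub> b = ((\<lambda>x\<in>{0..<d}. fst a x \<otimes>\<^bsub>K\<^esub> fst b (snd a x)), snd b \<circ> snd a)"
  by (simp add: wreath_def)

lemma wreath_one: "\<one>\<^bsub>wreath K d\<^esub> = ((\<lambda>x\<in>{0..<d}. \<one>\<^bsub>K\<^esub>), id)"
  by (simp add: wreath_def)

lemma perm_in: "\<tau> permutes {0..<d::nat} \<Longrightarrow> x < d \<Longrightarrow> \<tau> x < d"
  using permutes_in_image[of \<tau> "{0..<d}" x] by auto

lemma wreath_group:
  assumes "group K"
  shows "group (wreath K d)"
proof -
  interpret K: group K by fact
  show ?thesis
  proof (rule groupI)
    fix a b assume a: "a \<in> carrier (wreath K d)" and b: "b \<in> carrier (wreath K d)"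
    then show "a \<otimes>\<^bsub>wreath K d\<^esub> b \<in> carrier (wreath K d)"
      by (auto simp: wreath_carrier wreath_mult PiE_iff perm_in permutes_compose)
  next
    show "\<one>\<^bsub>wreath K d\<^esub> \<in> carrier (wreath K d)"
      by (auto simp: wreath_carrier wreath_one permutes_id)
  next
    fix a b c assume a: "a \<in> carrier (wreath K d)" and b: "b \<in> carrier (wreath K d)"
      and c: "c \<in> carrier (wreath K d)"
    then show "a \<otimes>\<^bsub>wreath K d\<^esub> b \<otimes>\<^bsub>wreath K d\<^esub> c = a \<otimes>\<^bsub>wreath K d\<^esub> (b \<otimes>\<^bsub>wreath K d\<^esub> c)"
      by (auto simp: wreath_carrier wreath_mult PiE_iff perm_in K.m_assoc intro!: restrict_ext)
  next
    fix a assume a: "a \<in> carrier (wreath K d)"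
    then show "\<one>\<^bsub>wreath K d\<^esub> \<otimes>\<^bsub>wreath K d\<^esub> a = a"
      by (cases a) (auto simp: wreath_carrier wreath_mult wreath_one PiE_iff perm_in fun_eq_iff extensional_def)
  next
    fix a assume a: "a \<in> carrier (wreath K d)"
    obtain g \<tau> where a_eq: "a = (g, \<tau>)" and g: "g \<in> Pi\<^sub>E {0..<d} (\<lambda>_. carrier K)"
      and t: "\<tau> permutes {0..<d}"
      using a by (cases a) (auto simp: wreath_carrier)
    define y where "y = ((\<lambda>x\<in>{0..<d}. inv\<^bsub>K\<^esub> (g (Hilbert_Choice.inv \<tau> x))), Hilbert_Choice.inv \<tau>)"
    have ti: "Hilbert_Choice.inv \<tau> permutes {0..<d}" using t by (rule permutes_inv)
    have "y \<in> carrier (wreath K d)"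
      using g ti by (auto simp: y_def wreath_carrier PiE_iff perm_in)
    moreover have "y \<otimes>\<^bsub>wreath K d\<^esub> a = \<one>\<^bsub>wreath K d\<^esub>"
      using g ti t by (auto simp: y_def a_eq wreath_mult wreath_one PiE_iff perm_in permutes_inv_o
          intro!: restrict_ext)
    ultimately show "\<exists>y\<in>carrier (wreath K d). y \<otimes>\<^bsub>wreath K d\<^esub> a = \<one>\<^bsub>wreath K d\<^esub>" by blast
  qed
qed

lemma wr_map_hom:
  assumes "p \<in> hom K1 K2"
  shows "wr_map d p \<in> hom (wreath K1 d) (wreath K2 d)"
  using assms
  by (auto simp: hom_def wr_map_def wreath_carrier wreath_mult PiE_iff perm_in Pi_def
      intro!: restrict_ext)

lemma hom_comp: "f \<in> hom A B \<Longrightarrow> g \<in> hom B C \<Longrightarrow> (\<lambda>x. g (f x)) \<in> hom A C"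
  by (auto simp: hom_def Pi_def)


section \<open>Presented groups\<close>

lemma valid_word_simps[simp]:
  "valid_word l [] " "valid_word l (x # w) \<longleftrightarrow> fst x < l \<and> valid_word l w"
  "valid_word l (u @ v) \<longleftrightarrow> valid_word l u \<and> valid_word l v"
  by (auto simp: valid_word_def mem_Times_iff)

lemma pres_eq_valid: "pres_eq l R u v \<Longrightarrow> valid_word l u \<and> valid_word l v"
  by (induction rule: pres_eq.induct) auto

lemma pres_eq_app_left: "pres_eq l R u v \<Longrightarrow> valid_word l w \<Longrightarrow> pres_eq l R (w @ u) (w @ v)"
proof (induction rule: pres_eq.induct)
  case (refl w') then show ?case by (auto intro: pres_eq.refl)
next
  case (sym u v) then show ?case by (auto intro: pres_eq.sym)
next
  case (trans u v w') then show ?case by (auto intro: pres_eq.trans)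
next
  case (free u v i b)
  then show ?case using pres_eq.free[of l "w @ u" v i R b] by simp
next
  case (rel u v r)
  then show ?case using pres_eq.rel[of l "w @ u" v r R] by simp
qed

lemma pres_eq_app_right: "pres_eq l R u v \<Longrightarrow> valid_word l w \<Longrightarrow> pres_eq l R (u @ w) (v @ w)"
proof (induction rule: pres_eq.induct)
  case (refl w') then show ?case by (auto intro: pres_eq.refl)
next
  case (sym u v) then show ?case by (auto intro: pres_eq.sym)
next
  case (trans u v w') then show ?case by (auto intro: pres_eq.trans)
next
  case (free u v i b)
  then show ?case using pres_eq.free[of l u "v @ w" i R b] by simp
next
  case (rel u v r)
  then show ?case using pres_eq.rel[of l u "v @ w" r R] by simp
qed

lemma pres_eq_app: "pres_eq l R u u' \<Longrightarrow> pres_eq l R v v' \<Longrightarrow> pres_eq l R (u @ v) (u' @ v')"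
  by (meson pres_eq.trans pres_eq_app_left pres_eq_app_right pres_eq_valid)

lemma pres_class_eq: "pres_eq l R u v \<Longrightarrow> pres_class l R u = pres_class l R v"
  unfolding pres_class_def by (auto intro: pres_eq.trans pres_eq.sym)

lemma pres_class_self: "valid_word l w \<Longrightarrow> w \<in> pres_class l R w"
  by (simp add: pres_class_def pres_eq.refl)

lemma pres_class_some: "valid_word l w \<Longrightarrow> pres_eq l R w (SOME a. a \<in> pres_class l R w)"
proof -
  assume "valid_word l w"
  then have "(SOME a. a \<in> pres_class l R w) \<in> pres_class l R w"
    by (meson pres_class_self someI)
  then show ?thesis by (simp add: pres_class_def)
qed

lemma pres_carrier: "carrier (presented_group l R) = pres_class l R ` {w. valid_word l w}"
  by (simp add: presented_group_def)

lemma pres_one: "\<one>\<^bsub>presented_group l R\<^esub> = pres_class l R []"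
  by (simp add: presented_group_def)

lemma pres_mult_class:
  assumes "valid_word l u" "valid_word l v"
  shows "pres_class l R u \<otimes>\<^bsub>presented_group l R\<^esub> pres_class l R v = pres_class l R (u @ v)"
proof -
  have "pres_eq l R (u @ v) ((SOME a. a \<in> pres_class l R u) @ (SOME b. b \<in> pres_class l R v))"
    using assms by (intro pres_eq_app pres_class_some)
  then show ?thesis
    by (simp add: presented_group_def pres_class_eq)
qed

definition winv :: "gword \<Rightarrow> gword" where
  "winv w = rev (map (\<lambda>(i,b). (i, \<not> b)) w)"

lemma winv_valid: "valid_word l w \<Longrightarrow> valid_word l (winv w)"
  by (auto simp: valid_word_def winv_def)

lemma winv_eq: "valid_word l w \<Longrightarrow> pres_eq l R (winv w @ w) []"
proof (induction w)
  case Nil then show ?case by (simp add: winv_def pres_eq.refl)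
next
  case (Cons x w)
  obtain i b where x: "x = (i, b)" by (cases x)
  have v: "valid_word l (winv w)" "valid_word l w" "i < l"
    using Cons.prems x by (auto intro: winv_valid)
  have "winv (x # w) @ (x # w) = winv w @ [(i, \<not> b), (i, \<not> \<not> b)] @ w"
    by (simp add: winv_def x)
  moreover have "pres_eq l R (winv w @ [(i, \<not> b), (i, \<not> \<not> b)] @ w) (winv w @ w)"
    using v by (rule pres_eq.free)
  ultimately show ?case using Cons v by (metis pres_eq.trans)
qed

lemma presented_group_is_group: "group (presented_group l R)"
proof (rule groupI)
  fix a b assume "a \<in> carrier (presented_group l R)" "b \<in> carrier (presented_group l R)"
  then show "a \<otimes>\<^bsub>presented_group l R\<^esub> b \<in> carrier (presented_group l R)"
    by (auto simp: pres_carrier pres_mult_class)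
next
  show "\<one>\<^bsub>presented_group l R\<^esub> \<in> carrier (presented_group l R)"
    by (auto simp: pres_carrier pres_one)
next
  fix a b c assume "a \<in> carrier (presented_group l R)" "b \<in> carrier (presented_group l R)"
    "c \<in> carrier (presented_group l R)"
  then show "a \<otimes>\<^bsub>presented_group l R\<^esub> b \<otimes>\<^bsub>presented_group l R\<^esub> c =
     a \<otimes>\<^bsub>presented_group l R\<^esub> (b \<otimes>\<^bsub>presented_group l R\<^esub> c)"
    by (auto simp: pres_carrier pres_mult_class)
next
  fix a assume "a \<in> carrier (presented_group l R)"
  then show "\<one>\<^bsub>presented_group l R\<^esub> \<otimes>\<^bsub>presented_group l R\<^esub> a = a"
    by (auto simp: pres_carrier pres_mult_class pres_one)
next
  fix a assume "a \<in> carrier (presented_group l R)"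
  then obtain w where w: "valid_word l w" "a = pres_class l R w" by (auto simp: pres_carrier)
  then have "pres_class l R (winv w) \<otimes>\<^bsub>presented_group l R\<^esub> a = \<one>\<^bsub>presented_group l R\<^esub>"
    by (simp add: pres_mult_class winv_valid pres_one pres_class_eq winv_eq)
  moreover have "pres_class l R (winv w) \<in> carrier (presented_group l R)"
    using w by (auto simp: pres_carrier winv_valid)
  ultimately show "\<exists>y\<in>carrier (presented_group l R). y \<otimes>\<^bsub>presented_group l R\<^esub> a = \<one>\<^bsub>presented_group l R\<^esub>"
    by blast
qed

lemma pres_gen_carrier: "i < l \<Longrightarrow> pres_gen l R i \<in> carrier (presented_group l R)"
  by (auto simp: pres_gen_def pres_carrier intro!: image_eqI[where x="[(i,True)]"])

lemma pres_rel_one: "r \<in> R \<Longrightarrow> valid_word l r \<Longrightarrow> pres_class l R r = \<one>\<^bsub>presented_group l R\<^esub>"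
  using pres_eq.rel[of l "[]" "[]" r R] by (simp add: pres_one pres_class_eq)

lemma word_eval_Nil[simp]: "word_eval K f [] = \<one>\<^bsub>K\<^esub>"
  by (simp add: word_eval_def)

lemma word_eval_Cons[simp]: "word_eval K f ((i,b) # w) = (if b then f i else inv\<^bsub>K\<^esub> (f i)) \<otimes>\<^bsub>K\<^esub> word_eval K f w"
  by (simp add: word_eval_def)

lemma word_eval_carrier:
  assumes "group K" "\<And>i. i \<in> fst ` set w \<Longrightarrow> f i \<in> carrier K"
  shows "word_eval K f w \<in> carrier K"
  using assms(2)
proof (induction w)
  case Nil then show ?case using assms(1) by (simp add: group.is_monoid monoid.one_closed)
next
  case (Cons x w) then show ?case using assms(1)
    by (cases x) (auto simp: group.inv_closed monoid.m_closed group.is_monoid)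
qed

lemma word_eval_append:
  assumes "group K" "\<And>i. i \<in> fst ` set u \<Longrightarrow> f i \<in> carrier K" "\<And>i. i \<in> fst ` set v \<Longrightarrow> f i \<in> carrier K"
  shows "word_eval K f (u @ v) = word_eval K f u \<otimes>\<^bsub>K\<^esub> word_eval K f v"
  using assms(2)
proof (induction u)
  case Nil then show ?case using assms word_eval_carrier[OF assms(1,3)]
    by (simp add: group.is_monoid monoid.l_one)
next
  case (Cons x u)
  interpret K: group K by fact
  obtain i b where x: "x = (i,b)" by (cases x)
  have c: "word_eval K f u \<in> carrier K" "word_eval K f v \<in> carrier K" "f i \<in> carrier K"
    using Cons.prems x assms word_eval_carrier[OF assms(1,3)] word_eval_carrier[OF assms(1), of u f] by auto
  show ?case using Cons c x by (simp add: K.m_assoc)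
qed

lemma word_eval_class:
  assumes "valid_word l w"
  shows "pres_class l R w = word_eval (presented_group l R) (pres_gen l R) w"
  using assms
proof (induction w)
  case Nil then show ?case by (simp add: pres_one)
next
  case (Cons x w)
  interpret P: group "presented_group l R" by (rule presented_group_is_group)
  obtain i b where x: "x = (i,b)" by (cases x)
  have il: "i < l" and vw: "valid_word l w" using Cons.prems x by auto
  have split: "pres_class l R ((i,b) # w) = pres_class l R [(i,b)] \<otimes>\<^bsub>presented_group l R\<^esub> pres_class l R w"
    using il vw by (simp add: pres_mult_class)
  have "pres_class l R [(i,b)] = (if b then pres_gen l R i else inv\<^bsub>presented_group l R\<^esub> pres_gen l R i)"
  proof (cases b)
    case True then show ?thesis by (simp add: pres_gen_def)
  next
    case False
    have "pres_class l R [(i,False)] \<otimes>\<^bsub>presented_group l R\<^esub> pres_gen l R i = \<one>\<^bsub>presented_group l R\<^esub>"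
      using il pres_eq.free[of l "[]" "[]" i R False]
      by (simp add: pres_gen_def pres_mult_class pres_one pres_class_eq)
    moreover have "pres_class l R [(i,False)] \<in> carrier (presented_group l R)"
      using il by (auto simp: pres_carrier intro!: image_eqI[where x="[(i,False)]"])
    ultimately have "inv\<^bsub>presented_group l R\<^esub> pres_gen l R i = pres_class l R [(i,False)]"
      using P.inv_equality pres_gen_carrier[OF il] by blast
    then show ?thesis using False by simp
  qed
  then show ?case using split Cons vw x by simp
qed

lemma pres_carrier_word:
  assumes "a \<in> carrier (presented_group l R)"
  shows "\<exists>w. valid_word l w \<and> a = word_eval (presented_group l R) (pres_gen l R) w"
  using assms word_eval_class by (auto simp: pres_carrier)

lemma word_eval_respects:
  assumes "group K" "\<And>i. i < l \<Longrightarrow> f i \<in> carrier K"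
    and "\<And>r. r \<in> R \<Longrightarrow> valid_word l r \<Longrightarrow> word_eval K f r = \<one>\<^bsub>K\<^esub>"
  shows "pres_eq l R u v \<Longrightarrow> word_eval K f u = word_eval K f v"
proof (induction rule: pres_eq.induct)
  case (free u v i b)
  interpret K: group K by fact
  have c: "\<And>w. valid_word l w \<Longrightarrow> word_eval K f w \<in> carrier K"
    using assms(2) by (intro word_eval_carrier[OF assms(1)]) (auto simp: valid_word_def)
  have e: "\<And>u v. valid_word l u \<Longrightarrow> valid_word l v \<Longrightarrow> word_eval K f (u @ v) = word_eval K f u \<otimes>\<^bsub>K\<^esub> word_eval K f v"
    using assms(2) by (intro word_eval_append[OF assms(1)]) (auto simp: valid_word_def)
  have fi: "f i \<in> carrier K" using free assms(2) by auto
  have "word_eval K f (u @ [(i, b), (i, \<not> b)] @ v) = word_eval K f u \<otimes>\<^bsub>K\<^esub> (word_eval K f [(i, b), (i, \<not> b)] \<otimes>\<^bsub>K\<^esub> word_eval K f v)"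
    using free fi c by (cases b) (simp_all add: e K.m_assoc[symmetric])
  also have "word_eval K f [(i, b), (i, \<not> b)] = \<one>\<^bsub>K\<^esub>"
    using fi by (cases b) auto
  finally show ?case using free c e fi by simp
next
  case (rel u v r)
  interpret K: group K by fact
  have c: "\<And>w. valid_word l w \<Longrightarrow> word_eval K f w \<in> carrier K"
    using assms(2) by (intro word_eval_carrier[OF assms(1)]) (auto simp: valid_word_def)
  have e: "\<And>u v. valid_word l u \<Longrightarrow> valid_word l v \<Longrightarrow> word_eval K f (u @ v) = word_eval K f u \<otimes>\<^bsub>K\<^esub> word_eval K f v"
    using assms(2) by (intro word_eval_append[OF assms(1)]) (auto simp: valid_word_def)
  show ?case using rel c e assms(3) by simp
qed auto

lemma pres_map_class:
  assumes "group K" "\<And>i. i < l \<Longrightarrow> f i \<in> carrier K"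
    and "\<And>r. r \<in> R \<Longrightarrow> valid_word l r \<Longrightarrow> word_eval K f r = \<one>\<^bsub>K\<^esub>"
    and "valid_word l w"
  shows "pres_map K f (pres_class l R w) = word_eval K f w"
  unfolding pres_map_def
  using word_eval_respects[OF assms(1-3) pres_class_some[OF assms(4)]] by simp

lemma pres_map_hom:
  assumes "group K" "\<And>i. i < l \<Longrightarrow> f i \<in> carrier K"
    and "\<And>r. r \<in> R \<Longrightarrow> valid_word l r \<Longrightarrow> word_eval K f r = \<one>\<^bsub>K\<^esub>"
  shows "pres_map K f \<in> hom (presented_group l R) K"
proof -
  have c: "\<And>w. valid_word l w \<Longrightarrow> word_eval K f w \<in> carrier K"
    using assms(2) by (intro word_eval_carrier[OF assms(1)]) (auto simp: valid_word_def)
  have e: "\<And>u v. valid_word l u \<Longrightarrow> valid_word l v \<Longrightarrow> word_eval K f (u @ v) = word_eval K f u \<otimes>\<^bsub>K\<^esub> word_eval K f v"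
    using assms(2) by (intro word_eval_append[OF assms(1)]) (auto simp: valid_word_def)
  show ?thesis
    by (auto simp: hom_def pres_carrier pres_map_class[OF assms] pres_mult_class c e)
qed

lemma pres_map_gen:
  assumes "group K" "\<And>i. i < l \<Longrightarrow> f i \<in> carrier K"
    and "\<And>r. r \<in> R \<Longrightarrow> valid_word l r \<Longrightarrow> word_eval K f r = \<one>\<^bsub>K\<^esub>"
    and "i < l"
  shows "pres_map K f (pres_gen l R i) = f i"
proof -
  have v: "valid_word l [(i,True)]" using assms(4) by (simp add: valid_word_def)
  have "pres_map K f (pres_gen l R i) = word_eval K f [(i,True)]"
    unfolding pres_gen_def by (rule pres_map_class[OF assms(1-3) v])
  also have "\<dots> = f i \<otimes>\<^bsub>K\<^esub> \<one>\<^bsub>K\<^esub>" by simp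
  also have "\<dots> = f i" using assms(2)[OF assms(4)] assms(1) by (simp add: group.is_monoid monoid.r_one)
  finally show ?thesis .
qed

lemma hom_word_eval:
  assumes "group K1" "group K2" "\<phi> \<in> hom K1 K2" "\<And>i. i \<in> fst ` set w \<Longrightarrow> f i \<in> carrier K1"
  shows "\<phi> (word_eval K1 f w) = word_eval K2 (\<lambda>i. \<phi> (f i)) w"
proof -
  interpret gh: group_hom K1 K2 \<phi> using assms by (intro group_hom.intro group_hom_axioms.intro) auto
  show ?thesis
  using assms(4)
proof (induction w)
  case Nil then show ?case by simp
next
  case (Cons x w)
  obtain i b where x: "x = (i,b)" by (cases x)
  have pw: "\<And>j. j \<in> fst ` set w \<Longrightarrow> f j \<in> carrier K1" using Cons.prems by auto
  have c: "f i \<in> carrier K1" "word_eval K1 f w \<in> carrier K1"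
    using Cons.prems x word_eval_carrier[OF assms(1) pw] by auto
  have IH: "\<phi> (word_eval K1 f w) = word_eval K2 (\<lambda>i. \<phi> (f i)) w" using Cons.IH pw by blast
  show ?case using IH c x by (simp add: gh.hom_mult gh.hom_inv)
qed
qed

lemma word_eval_cong:
  "(\<And>i. i \<in> fst ` set w \<Longrightarrow> f i = g i) \<Longrightarrow> word_eval K f w = word_eval K g w"
proof (induction w)
  case (Cons x w)
  obtain i b where x: "x = (i,b)" by (cases x)
  have "f i = g i" using Cons.prems x by auto
  moreover have "word_eval K f w = word_eval K g w" using Cons by auto
  ultimately show ?case using x by simp
qed simp

lemma pres_hom_eq:
  assumes "group K" "\<phi> \<in> hom (presented_group l R) K" "\<psi> \<in> hom (presented_group l R) K"
    and "\<And>i. i < l \<Longrightarrow> \<phi> (pres_gen l R i) = \<psi> (pres_gen l R i)"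
    and "a \<in> carrier (presented_group l R)"
  shows "\<phi> a = \<psi> a"
proof -
  obtain w where w: "valid_word l w" "a = word_eval (presented_group l R) (pres_gen l R) w"
    using pres_carrier_word[OF assms(5)] by blast
  have g: "\<And>i. i \<in> fst ` set w \<Longrightarrow> pres_gen l R i \<in> carrier (presented_group l R)"
    using w(1) by (auto simp: valid_word_def pres_gen_carrier)
  have "\<phi> a = word_eval K (\<lambda>i. \<phi> (pres_gen l R i)) w"
    using w hom_word_eval[OF presented_group_is_group assms(1,2) g] by simp
  also have "\<dots> = word_eval K (\<lambda>i. \<psi> (pres_gen l R i)) w"
    using w(1) assms(4) by (intro word_eval_cong) (auto simp: valid_word_def)
  also have "\<dots> = \<psi> a"
    using w hom_word_eval[OF presented_group_is_group assms(1,3) g] by simp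
  finally show ?thesis .
qed


section \<open>Sections in self-similar groups\<close>

lemma words_Nil[simp]: "[] \<in> words d" by (simp add: words_def)
lemma words_Cons[simp]: "x # w \<in> words d \<longleftrightarrow> x < d \<and> w \<in> words d" by (auto simp: words_def)
lemma words_append[simp]: "u @ w \<in> words d \<longleftrightarrow> u \<in> words d \<and> w \<in> words d" by (auto simp: words_def)

lemma sect_append: "sect \<Phi> a (u @ v) = sect \<Phi> (sect \<Phi> a u) v"
  by (induction u arbitrary: a) auto

lemma fst_wr_map: "x < d \<Longrightarrow> fst (wr_map d p k) x = p (fst k x)"
  by (cases k) (simp add: wr_map_def)

lemma snd_wr_map: "snd (wr_map d p k) = snd k"
  by (cases k) (simp add: wr_map_def)

locale ssg =
  fixes K :: "('a,'b) monoid_scheme" and d :: nat and \<Phi> :: "'a \<Rightarrow> (nat \<Rightarrow> 'a) \<times> (nat \<Rightarrow> nat)"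
  assumes grp: "group K" and Phi_hom: "\<Phi> \<in> hom K (wreath K d)"
begin

interpretation K: group K by (rule grp)

lemma W_group: "group (wreath K d)" by (rule wreath_group[OF grp])

lemma gh: "group_hom K (wreath K d) \<Phi>"
  using grp W_group Phi_hom by (intro group_hom.intro group_hom_axioms.intro) auto

lemma Phi_car: "a \<in> carrier K \<Longrightarrow> \<Phi> a \<in> carrier (wreath K d)"
  using Phi_hom by (auto simp: hom_def)

lemma fst_car: "a \<in> carrier K \<Longrightarrow> x < d \<Longrightarrow> fst (\<Phi> a) x \<in> carrier K"
  using Phi_car[of a] by (auto simp: wreath_carrier PiE_iff mem_Times_iff)

lemma fst_ext: "a \<in> carrier K \<Longrightarrow> fst (\<Phi> a) \<in> extensional {0..<d}"
  using Phi_car[of a] by (auto simp: wreath_carrier PiE_iff mem_Times_iff)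

lemma snd_perm: "a \<in> carrier K \<Longrightarrow> snd (\<Phi> a) permutes {0..<d}"
  using Phi_car[of a] by (auto simp: wreath_carrier mem_Times_iff)

lemma snd_lt: "a \<in> carrier K \<Longrightarrow> x < d \<Longrightarrow> snd (\<Phi> a) x < d"
  using snd_perm perm_in by blast

lemma Phi_mult: "a \<in> carrier K \<Longrightarrow> b \<in> carrier K \<Longrightarrow> \<Phi> (a \<otimes>\<^bsub>K\<^esub> b) = \<Phi> a \<otimes>\<^bsub>wreath K d\<^esub> \<Phi> b"
  using Phi_hom by (auto simp: hom_def)

lemma fst_mult: "a \<in> carrier K \<Longrightarrow> b \<in> carrier K \<Longrightarrow> x < d \<Longrightarrow>
    fst (\<Phi> (a \<otimes>\<^bsub>K\<^esub> b)) x = fst (\<Phi> a) x \<otimes>\<^bsub>K\<^esub> fst (\<Phi> b) (snd (\<Phi> a) x)"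
  by (simp add: Phi_mult wreath_mult)

lemma snd_mult: "a \<in> carrier K \<Longrightarrow> b \<in> carrier K \<Longrightarrow>
    snd (\<Phi> (a \<otimes>\<^bsub>K\<^esub> b)) = snd (\<Phi> b) \<circ> snd (\<Phi> a)"
  by (simp add: Phi_mult wreath_mult)

lemma Phi_one: "\<Phi> \<one>\<^bsub>K\<^esub> = \<one>\<^bsub>wreath K d\<^esub>"
  using group_hom.hom_one[OF gh] .

lemma fst_one: "x < d \<Longrightarrow> fst (\<Phi> \<one>\<^bsub>K\<^esub>) x = \<one>\<^bsub>K\<^esub>"
  by (simp add: Phi_one wreath_one)

lemma snd_one: "snd (\<Phi> \<one>\<^bsub>K\<^esub>) = id"
  by (simp add: Phi_one wreath_one)

lemma act_words: "a \<in> carrier K \<Longrightarrow> v \<in> words d \<Longrightarrow> act \<Phi> a v \<in> words d \<and> length (act \<Phi> a v) = length v"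
  by (induction v arbitrary: a) (auto simp: snd_lt fst_car)

lemma sect_car: "a \<in> carrier K \<Longrightarrow> v \<in> words d \<Longrightarrow> sect \<Phi> a v \<in> carrier K"
  by (induction v arbitrary: a) (auto simp: fst_car)

lemma sect_mult: "a \<in> carrier K \<Longrightarrow> b \<in> carrier K \<Longrightarrow> v \<in> words d \<Longrightarrow>
   sect \<Phi> (a \<otimes>\<^bsub>K\<^esub> b) v = sect \<Phi> a v \<otimes>\<^bsub>K\<^esub> sect \<Phi> b (act \<Phi> a v)"
  by (induction v arbitrary: a b) (auto simp: fst_mult fst_car snd_lt)

lemma act_mult: "a \<in> carrier K \<Longrightarrow> b \<in> carrier K \<Longrightarrow> v \<in> words d \<Longrightarrow>
   act \<Phi> (a \<otimes>\<^bsub>K\<^esub> b) v = act \<Phi> b (act \<Phi> a v)"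
  by (induction v arbitrary: a b) (auto simp: fst_mult snd_mult fst_car snd_lt)

lemma sect_one: "v \<in> words d \<Longrightarrow> sect \<Phi> \<one>\<^bsub>K\<^esub> v = \<one>\<^bsub>K\<^esub>"
  by (induction v) (auto simp: fst_one)

lemma act_one: "v \<in> words d \<Longrightarrow> act \<Phi> \<one>\<^bsub>K\<^esub> v = v"
  by (induction v) (auto simp: fst_one snd_one)

lemma sect_inv_formula:
  assumes g: "g \<in> carrier K" and w: "w \<in> words d"
  shows "sect \<Phi> g w = inv\<^bsub>K\<^esub> (sect \<Phi> (inv\<^bsub>K\<^esub> g) (act \<Phi> g w))"
proof -
  have gi: "inv\<^bsub>K\<^esub> g \<in> carrier K" using g by simp
  have aw: "act \<Phi> g w \<in> words d" using act_words[OF g w] by simp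
  have "\<one>\<^bsub>K\<^esub> = sect \<Phi> (g \<otimes>\<^bsub>K\<^esub> inv\<^bsub>K\<^esub> g) w" using g w by (simp add: sect_one)
  also have "\<dots> = sect \<Phi> g w \<otimes>\<^bsub>K\<^esub> sect \<Phi> (inv\<^bsub>K\<^esub> g) (act \<Phi> g w)"
    using g gi w by (rule sect_mult)
  finally have "sect \<Phi> g w \<otimes>\<^bsub>K\<^esub> sect \<Phi> (inv\<^bsub>K\<^esub> g) (act \<Phi> g w) = \<one>\<^bsub>K\<^esub>" by simp
  then show ?thesis
    using sect_car[OF g w] sect_car[OF gi aw] by (metis K.inv_equality K.inv_inv sect_car gi aw)
qed

end

lemma sect_semiconj:
  assumes "ssg K1 d \<Phi>1" "\<And>a. a \<in> carrier K1 \<Longrightarrow> wr_map d p (\<Phi>1 a) = \<Phi>2 (p a)"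
  shows "a \<in> carrier K1 \<Longrightarrow> v \<in> words d \<Longrightarrow> p (sect \<Phi>1 a v) = sect \<Phi>2 (p a) v"
proof (induction v arbitrary: a)
  case (Cons x w)
  have "p (sect \<Phi>1 (fst (\<Phi>1 a) x) w) = sect \<Phi>2 (p (fst (\<Phi>1 a) x)) w"
    using Cons ssg.fst_car[OF assms(1)] by auto
  also have "p (fst (\<Phi>1 a) x) = fst (\<Phi>2 (p a)) x"
    using Cons.prems assms(2)[of a] fst_wr_map[of x d p "\<Phi>1 a"] by auto
  finally show ?case by simp
qed simp

section \<open>Nucleus properties\<close>

locale ssg_nuc = ssg +
  fixes N
  assumes nuc: "is_nucleus K d \<Phi> N" and dpos: "0 < d"
begin

interpretation K: group K by (rule grp)

lemma N_cs: "contracting_set K d \<Phi> N" using nuc by (simp add: is_nucleus_def)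
lemma N_min: "contracting_set K d \<Phi> M \<Longrightarrow> N \<subseteq> M" using nuc by (simp add: is_nucleus_def)
lemma N_sub: "N \<subseteq> carrier K" using N_cs by (simp add: contracting_set_def)
lemma N_fin: "finite N" using N_cs by (simp add: contracting_set_def)
lemma N_contr: "g \<in> carrier K \<Longrightarrow> \<exists>k. \<forall>v\<in>words d. length v \<ge> k \<longrightarrow> sect \<Phi> g v \<in> N"
  using N_cs by (simp add: contracting_set_def)

lemma one_in_N: "\<one>\<^bsub>K\<^esub> \<in> N"
proof -
  obtain k where k: "\<forall>v\<in>words d. length v \<ge> k \<longrightarrow> sect \<Phi> \<one>\<^bsub>K\<^esub> v \<in> N"
    using N_contr[of "\<one>\<^bsub>K\<^esub>"] by auto
  have "replicate k 0 \<in> words d" using dpos by (auto simp: words_def)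
  then show ?thesis using k sect_one by fastforce
qed

lemma N_sect: "m \<in> N \<Longrightarrow> v \<in> words d \<Longrightarrow> sect \<Phi> m v \<in> N"
proof -
  let ?M = "{m \<in> N. \<forall>v\<in>words d. sect \<Phi> m v \<in> N}"
  have "contracting_set K d \<Phi> ?M"
    unfolding contracting_set_def
  proof (intro conjI ballI)
    show "finite ?M" using N_fin by simp
    show "?M \<subseteq> carrier K" using N_sub by auto
  next
    fix g assume g: "g \<in> carrier K"
    obtain k where k: "\<forall>v\<in>words d. length v \<ge> k \<longrightarrow> sect \<Phi> g v \<in> N" using N_contr[OF g] by auto
    show "\<exists>k. \<forall>v\<in>words d. k \<le> length v \<longrightarrow> sect \<Phi> g v \<in> ?M"
      using k by (intro exI[of _ k]) (auto simp: sect_append[symmetric])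
  qed
  then have "N \<subseteq> ?M" by (rule N_min)
  then show "m \<in> N \<Longrightarrow> v \<in> words d \<Longrightarrow> sect \<Phi> m v \<in> N" by auto
qed

lemma N_inv: "m \<in> N \<Longrightarrow> inv\<^bsub>K\<^esub> m \<in> N"
proof -
  let ?M = "(\<lambda>x. inv\<^bsub>K\<^esub> x) ` N"
  have "contracting_set K d \<Phi> ?M"
    unfolding contracting_set_def
  proof (intro conjI ballI)
    show "finite ?M" using N_fin by simp
    show "?M \<subseteq> carrier K" using N_sub by auto
  next
    fix g assume g: "g \<in> carrier K"
    obtain k where k: "\<forall>v\<in>words d. length v \<ge> k \<longrightarrow> sect \<Phi> (inv\<^bsub>K\<^esub> g) v \<in> N"
      using N_contr[of "inv\<^bsub>K\<^esub> g"] g by auto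
    show "\<exists>k. \<forall>v\<in>words d. k \<le> length v \<longrightarrow> sect \<Phi> g v \<in> ?M"
    proof (intro exI[of _ k] ballI impI)
      fix v assume v: "v \<in> words d" "k \<le> length v"
      have "sect \<Phi> (inv\<^bsub>K\<^esub> g) (act \<Phi> g v) \<in> N" using k act_words[OF g v(1)] v by auto
      then show "sect \<Phi> g v \<in> ?M" using sect_inv_formula[OF g v(1)] by auto
    qed
  qed
  then have "N \<subseteq> ?M" by (rule N_min)
  moreover assume "m \<in> N"
  ultimately obtain m' where "m' \<in> N" "m = inv\<^bsub>K\<^esub> m'" by auto
  then show ?thesis using N_sub by auto
qed

lemma N_anc: "m \<in> N \<Longrightarrow> \<exists>m'\<in>N. \<exists>v\<in>words d. length v = L \<and> sect \<Phi> m' v = m"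
proof -
  let ?M = "{m \<in> N. \<exists>m'\<in>N. \<exists>v\<in>words d. length v = L \<and> sect \<Phi> m' v = m}"
  have "contracting_set K d \<Phi> ?M"
    unfolding contracting_set_def
  proof (intro conjI ballI)
    show "finite ?M" using N_fin by simp
    show "?M \<subseteq> carrier K" using N_sub by auto
  next
    fix g assume g: "g \<in> carrier K"
    obtain k where k: "\<forall>v\<in>words d. length v \<ge> k \<longrightarrow> sect \<Phi> g v \<in> N" using N_contr[OF g] by auto
    show "\<exists>k'. \<forall>v\<in>words d. k' \<le> length v \<longrightarrow> sect \<Phi> g v \<in> ?M"
    proof (intro exI[of _ "k + L"] ballI impI)
      fix v assume v: "v \<in> words d" "k + L \<le> length v"
      define v1 where "v1 = take (length v - L) v"
      define v2 where "v2 = drop (length v - L) v"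
      have vv: "v = v1 @ v2" by (simp add: v1_def v2_def)
      have w: "v1 \<in> words d" "v2 \<in> words d" using v(1) vv by (metis words_append)+
      have l: "length v2 = L" "length v1 \<ge> k" using v(2) by (auto simp: v1_def v2_def)
      have "sect \<Phi> g v = sect \<Phi> (sect \<Phi> g v1) v2" by (simp add: vv sect_append)
      moreover have "sect \<Phi> g v1 \<in> N" using k w l by auto
      moreover have "sect \<Phi> g v \<in> N" using k v by auto
      ultimately show "sect \<Phi> g v \<in> ?M" using w l by auto
    qed
  qed
  then have "N \<subseteq> ?M" by (rule N_min)
  then show "m \<in> N \<Longrightarrow> ?thesis" by auto
qed

end


locale main =
  fixes G :: "('a,'b) monoid_scheme" and \<Phi> :: "'a \<Rightarrow> (nat \<Rightarrow> 'a) \<times> (nat \<Rightarrow> nat)"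
    and d l :: nat and N :: "'a set" and n :: "nat \<Rightarrow> 'a" and h :: "nat \<Rightarrow> nat \<Rightarrow> gword set"
  assumes d2: "d \<ge> 2"
    and ss: "self_similar G d \<Phi>"
    and nuc0: "is_nucleus G d \<Phi> N"
    and enum: "bij_betw n {0..<l} N"
    and h_car: "\<And>x i. x < d \<Longrightarrow> i < l \<Longrightarrow> h x i \<in> carrier (G0un G n l)"
    and h_fix: "\<And>x i. x < d \<Longrightarrow> i < l \<Longrightarrow> snd (\<Phi> (pi_un G n (h x i))) x = x"
    and h_sec: "\<And>x i. x < d \<Longrightarrow> i < l \<Longrightarrow> fst (\<Phi> (pi_un G n (h x i))) x = n i"
begin

sublocale ssg_nuc G d \<Phi> N
  using ss nuc0 d2 by (simp add: ssg_nuc_def ssg_def ssg_nuc_axioms_def self_similar_def)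

interpretation G: group G by (rule grp)

abbreviation "U \<equiv> G0un G n l"
abbreviation "RR \<equiv> un_relators G n l"
abbreviation "s \<equiv> s_un G n l"
abbreviation "ph \<equiv> phi_un G d \<Phi> n l"
abbreviation "pu \<equiv> pi_un G n"
abbreviation "nx \<equiv> nidx \<Phi> n l"

definition F :: "nat \<Rightarrow> (nat \<Rightarrow> gword set) \<times> (nat \<Rightarrow> nat)" where
  "F i = ((\<lambda>x\<in>{0..<d}. s (nx i x)), snd (\<Phi> (n i)))"

lemma n_N: "i < l \<Longrightarrow> n i \<in> N" using enum by (auto simp: bij_betw_def)
lemma n_car: "i < l \<Longrightarrow> n i \<in> carrier G" using n_N N_sub by auto
lemma n_inj: "i < l \<Longrightarrow> j < l \<Longrightarrow> n i = n j \<Longrightarrow> i = j"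
  using enum by (auto simp: bij_betw_def inj_on_def)
lemma N_ex: "m \<in> N \<Longrightarrow> \<exists>i<l. n i = m"
  using enum by (auto simp: bij_betw_def)

lemma nidx: assumes "i < l" "x < d" shows "nx i x < l \<and> n (nx i x) = fst (\<Phi> (n i)) x"
proof -
  have "fst (\<Phi> (n i)) x = sect \<Phi> (n i) [x]" by simp
  also have "\<dots> \<in> N" using assms by (intro N_sect n_N) auto
  finally obtain j where j: "j < l" "n j = fst (\<Phi> (n i)) x" using N_ex by blast
  have "\<exists>!j. j < l \<and> n j = fst (\<Phi> (n i)) x" using j n_inj by metis
  then show ?thesis unfolding nidx_def by (rule theI')
qed

lemma U_def': "U = presented_group l RR" by (simp add: G0un_def)
lemma s_def': "s i = pres_gen l RR i" by (simp add: s_un_def)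

lemma U_group: "group U" by (simp add: U_def' presented_group_is_group)
interpretation U: group U by (rule U_group)

lemma s_car: "i < l \<Longrightarrow> s i \<in> carrier U" by (simp add: U_def' s_def' pres_gen_carrier)

lemma RR_valid: "r \<in> RR \<Longrightarrow> valid_word l r"
  by (auto simp: un_relators_def valid_word_def)

lemma cls2: "i < l \<Longrightarrow> j < l \<Longrightarrow> pres_class l RR [(i,True),(j,True)] = s i \<otimes>\<^bsub>U\<^esub> s j"
  using pres_mult_class[of l "[(i,True)]" "[(j,True)]" RR]
  by (simp add: U_def' s_def' pres_gen_def valid_word_def)

lemma cls3: "i < l \<Longrightarrow> j < l \<Longrightarrow> k < l \<Longrightarrow>
   pres_class l RR [(i,True),(j,True),(k,True)] = s i \<otimes>\<^bsub>U\<^esub> (s j \<otimes>\<^bsub>U\<^esub> s k)"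
  using pres_mult_class[of l "[(i,True)]" "[(j,True),(k,True)]" RR] cls2[of j k]
  by (simp add: U_def' s_def' pres_gen_def valid_word_def)

lemma rel1: "i < l \<Longrightarrow> n i = \<one>\<^bsub>G\<^esub> \<Longrightarrow> s i = \<one>\<^bsub>U\<^esub>"
  using pres_rel_one[of "[(i,True)]" RR l]
  by (auto simp: U_def' s_def' pres_gen_def valid_word_def un_relators_def)

lemma rel2: "i < l \<Longrightarrow> j < l \<Longrightarrow> n i \<otimes>\<^bsub>G\<^esub> n j = \<one>\<^bsub>G\<^esub> \<Longrightarrow> s i \<otimes>\<^bsub>U\<^esub> s j = \<one>\<^bsub>U\<^esub>"
  using pres_rel_one[of "[(i,True),(j,True)]" RR l] cls2[of i j]
  by (auto simp: U_def' valid_word_def un_relators_def)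

lemma rel3: "i < l \<Longrightarrow> j < l \<Longrightarrow> k < l \<Longrightarrow> n i \<otimes>\<^bsub>G\<^esub> n j \<otimes>\<^bsub>G\<^esub> n k = \<one>\<^bsub>G\<^esub> \<Longrightarrow>
    s i \<otimes>\<^bsub>U\<^esub> (s j \<otimes>\<^bsub>U\<^esub> s k) = \<one>\<^bsub>U\<^esub>"
  using pres_rel_one[of "[(i,True),(j,True),(k,True)]" RR l] cls3[of i j k]
  by (auto simp: U_def' valid_word_def un_relators_def)

lemma RR_cases:
  assumes "r \<in> RR"
  obtains i where "i < l" "n i = \<one>\<^bsub>G\<^esub>" "r = [(i,True)]"
  | i j where "i < l" "j < l" "n i \<otimes>\<^bsub>G\<^esub> n j = \<one>\<^bsub>G\<^esub>" "r = [(i,True),(j,True)]"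
  | i j k where "i < l" "j < l" "k < l" "n i \<otimes>\<^bsub>G\<^esub> n j \<otimes>\<^bsub>G\<^esub> n k = \<one>\<^bsub>G\<^esub>" "r = [(i,True),(j,True),(k,True)]"
  using assms unfolding un_relators_def by blast

lemma pu_rel: "r \<in> RR \<Longrightarrow> valid_word l r \<Longrightarrow> word_eval G n r = \<one>\<^bsub>G\<^esub>"
  by (erule RR_cases) (auto simp: n_car G.m_assoc)

lemma pu_hom: "pu \<in> hom U G"
  unfolding pi_un_def U_def' using pres_map_hom[OF grp n_car pu_rel] by blast

lemma pu_s: "i < l \<Longrightarrow> pu (s i) = n i"
  unfolding pi_un_def s_def' using pres_map_gen[OF grp n_car pu_rel] by blast

lemma pu_car: "a \<in> carrier U \<Longrightarrow> pu a \<in> carrier G"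
  using pu_hom by (auto simp: hom_def)

lemma WU_group: "group (wreath U d)" by (rule wreath_group[OF U_group])
interpretation WU: group "wreath U d" by (rule WU_group)

lemma F_fst: "i < l \<Longrightarrow> x < d \<Longrightarrow> fst (F i) x = s (nx i x)" by (simp add: F_def)
lemma F_snd: "snd (F i) = snd (\<Phi> (n i))" by (simp add: F_def)

lemma F_car: "i < l \<Longrightarrow> F i \<in> carrier (wreath U d)"
  using nidx s_car snd_perm n_car by (auto simp: F_def wreath_carrier)

lemma WU_eq_one:
  assumes "a \<in> carrier (wreath U d)" "\<And>x. x < d \<Longrightarrow> fst a x = \<one>\<^bsub>U\<^esub>" "snd a = id"
  shows "a = \<one>\<^bsub>wreath U d\<^esub>"
proof -
  have "fst a = (\<lambda>x\<in>{0..<d}. \<one>\<^bsub>U\<^esub>)"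
    using assms(1,2) by (auto simp: wreath_carrier PiE_iff extensional_def fun_eq_iff)
  then show ?thesis using assms(3) by (cases a) (simp add: wreath_one)
qed

lemma wmult_fst: "x < d \<Longrightarrow> fst (a \<otimes>\<^bsub>wreath K d\<^esub> b) x = fst a x \<otimes>\<^bsub>K\<^esub> fst b (snd a x)"
  by (simp add: wreath_mult)
lemma wmult_snd: "snd (a \<otimes>\<^bsub>wreath K d\<^esub> b) = snd b \<circ> snd a"
  by (simp add: wreath_mult)

lemma ph_rel: "r \<in> RR \<Longrightarrow> valid_word l r \<Longrightarrow> word_eval (wreath U d) F r = \<one>\<^bsub>wreath U d\<^esub>"
proof (erule RR_cases)
  fix i assume i: "i < l" "n i = \<one>\<^bsub>G\<^esub>" and r: "r = [(i,True)]"
  have "F i = \<one>\<^bsub>wreath U d\<^esub>"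
  proof (rule WU_eq_one[OF F_car[OF i(1)]])
    fix x assume x: "x < d"
    have "n (nx i x) = \<one>\<^bsub>G\<^esub>" using nidx[OF i(1) x] i x by (simp add: fst_one)
    then show "fst (F i) x = \<one>\<^bsub>U\<^esub>" using F_fst[OF i(1) x] rel1 nidx[OF i(1) x] by simp
  next
    show "snd (F i) = id" using i by (simp add: F_snd snd_one)
  qed
  then show ?thesis using r F_car[OF i(1)] by simp
next
  fix i j assume ij: "i < l" "j < l" "n i \<otimes>\<^bsub>G\<^esub> n j = \<one>\<^bsub>G\<^esub>" and r: "r = [(i,True),(j,True)]"
  have "F i \<otimes>\<^bsub>wreath U d\<^esub> F j = \<one>\<^bsub>wreath U d\<^esub>"
  proof (rule WU_eq_one)
    show "F i \<otimes>\<^bsub>wreath U d\<^esub> F j \<in> carrier (wreath U d)" using F_car ij by simp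
  next
    fix x assume x: "x < d"
    have t: "snd (\<Phi> (n i)) x < d" using snd_lt n_car ij x by blast
    have "\<one>\<^bsub>G\<^esub> = fst (\<Phi> (n i)) x \<otimes>\<^bsub>G\<^esub> fst (\<Phi> (n j)) (snd (\<Phi> (n i)) x)"
      using fst_mult[OF n_car[OF ij(1)] n_car[OF ij(2)] x, unfolded ij(3) fst_one[OF x]] .
    then have "n (nx i x) \<otimes>\<^bsub>G\<^esub> n (nx j (snd (\<Phi> (n i)) x)) = \<one>\<^bsub>G\<^esub>"
      using nidx[OF ij(1) x] nidx[OF ij(2) t] by simp
    then have "s (nx i x) \<otimes>\<^bsub>U\<^esub> s (nx j (snd (\<Phi> (n i)) x)) = \<one>\<^bsub>U\<^esub>"
      using rel2 nidx[OF ij(1) x] nidx[OF ij(2) t] by blast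
    then show "fst (F i \<otimes>\<^bsub>wreath U d\<^esub> F j) x = \<one>\<^bsub>U\<^esub>"
      using x t ij by (simp add: wmult_fst F_fst F_snd)
  next
    have "snd (\<Phi> (n i \<otimes>\<^bsub>G\<^esub> n j)) = id" using ij by (simp add: snd_one)
    then have "snd (\<Phi> (n j)) \<circ> snd (\<Phi> (n i)) = id" using snd_mult[OF n_car[OF ij(1)] n_car[OF ij(2)]] by simp
    then show "snd (F i \<otimes>\<^bsub>wreath U d\<^esub> F j) = id"
      by (simp add: wmult_snd F_snd)
  qed
  then show ?thesis using r F_car ij by simp
next
  fix i j k assume ijk: "i < l" "j < l" "k < l" "n i \<otimes>\<^bsub>G\<^esub> n j \<otimes>\<^bsub>G\<^esub> n k = \<one>\<^bsub>G\<^esub>"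
    and r: "r = [(i,True),(j,True),(k,True)]"
  have nij: "n i \<otimes>\<^bsub>G\<^esub> n j \<in> carrier G" using n_car ijk by simp
  have "F i \<otimes>\<^bsub>wreath U d\<^esub> (F j \<otimes>\<^bsub>wreath U d\<^esub> F k) = \<one>\<^bsub>wreath U d\<^esub>"
  proof (rule WU_eq_one)
    show "F i \<otimes>\<^bsub>wreath U d\<^esub> (F j \<otimes>\<^bsub>wreath U d\<^esub> F k) \<in> carrier (wreath U d)" using F_car ijk by simp
  next
    fix x assume x: "x < d"
    define y where "y = snd (\<Phi> (n i)) x"
    define z where "z = snd (\<Phi> (n j)) y"
    have y: "y < d" using snd_lt n_car ijk x by (simp add: y_def)
    have z: "z < d" using snd_lt n_car ijk y by (simp add: z_def)
    have "\<one>\<^bsub>G\<^esub> = fst (\<Phi> (n i \<otimes>\<^bsub>G\<^esub> n j)) x \<otimes>\<^bsub>G\<^esub> fst (\<Phi> (n k)) (snd (\<Phi> (n i \<otimes>\<^bsub>G\<^esub> n j)) x)"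
      using fst_mult[OF nij n_car[OF ijk(3)] x, unfolded ijk(4) fst_one[OF x]] .
    also have "\<dots> = fst (\<Phi> (n i)) x \<otimes>\<^bsub>G\<^esub> fst (\<Phi> (n j)) y \<otimes>\<^bsub>G\<^esub> fst (\<Phi> (n k)) z"
      using ijk x by (simp add: fst_mult snd_mult n_car y_def z_def)
    finally have "n (nx i x) \<otimes>\<^bsub>G\<^esub> n (nx j y) \<otimes>\<^bsub>G\<^esub> n (nx k z) = \<one>\<^bsub>G\<^esub>"
      using nidx[OF ijk(1) x] nidx[OF ijk(2) y] nidx[OF ijk(3) z] by simp
    then have "s (nx i x) \<otimes>\<^bsub>U\<^esub> (s (nx j y) \<otimes>\<^bsub>U\<^esub> s (nx k z)) = \<one>\<^bsub>U\<^esub>"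
      using rel3 nidx[OF ijk(1) x] nidx[OF ijk(2) y] nidx[OF ijk(3) z] by blast
    then show "fst (F i \<otimes>\<^bsub>wreath U d\<^esub> (F j \<otimes>\<^bsub>wreath U d\<^esub> F k)) x = \<one>\<^bsub>U\<^esub>"
      using x y z ijk by (simp add: wmult_fst wmult_snd F_fst F_snd y_def z_def)
  next
    have "snd (\<Phi> (n i \<otimes>\<^bsub>G\<^esub> n j \<otimes>\<^bsub>G\<^esub> n k)) = id" using ijk by (simp add: snd_one)
    then have "snd (\<Phi> (n k)) \<circ> (snd (\<Phi> (n j)) \<circ> snd (\<Phi> (n i))) = id"
      using snd_mult[OF nij n_car[OF ijk(3)]] snd_mult[OF n_car[OF ijk(1)] n_car[OF ijk(2)]] by simp
    then show "snd (F i \<otimes>\<^bsub>wreath U d\<^esub> (F j \<otimes>\<^bsub>wreath U d\<^esub> F k)) = id"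
      by (simp add: wmult_snd F_snd o_assoc)
  qed
  then show ?thesis using r F_car ijk by (simp add: WU.m_assoc)
qed

lemma ph_eq: "ph = pres_map (wreath U d) F"
  unfolding phi_un_def F_def[abs_def] by simp

lemma ph_hom: "ph \<in> hom U (wreath U d)"
  unfolding ph_eq U_def' using pres_map_hom[OF WU_group F_car ph_rel] by (simp add: U_def')

lemma ph_s: "i < l \<Longrightarrow> ph (s i) = F i"
  unfolding ph_eq s_def' using pres_map_gen[OF WU_group F_car ph_rel] by (simp add: U_def')

end


context main begin

interpretation G: group G by (rule grp)
interpretation U: group U by (rule U_group)
interpretation WU: group "wreath U d" by (rule WU_group)

lemma WG_group: "group (wreath G d)" by (rule wreath_group[OF grp])

lemma C1: "a \<in> carrier U \<Longrightarrow> wr_map d pu (ph a) = \<Phi> (pu a)"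
proof -
  assume a: "a \<in> carrier U"
  have h1: "(\<lambda>a. wr_map d pu (ph a)) \<in> hom U (wreath G d)" by (rule hom_comp[OF ph_hom wr_map_hom[OF pu_hom]])
  have h2: "(\<lambda>a. \<Phi> (pu a)) \<in> hom U (wreath G d)" by (rule hom_comp[OF pu_hom Phi_hom])
  have gen: "wr_map d pu (ph (pres_gen l RR i)) = \<Phi> (pu (pres_gen l RR i))" if i: "i < l" for i
  proof -
    have "fst (wr_map d pu (F i)) = fst (\<Phi> (n i))"
    proof
      fix x show "fst (wr_map d pu (F i)) x = fst (\<Phi> (n i)) x"
      proof (cases "x < d")
        case True
        then show ?thesis using nidx[OF i True] pu_s by (simp add: fst_wr_map F_fst i)
      next
        case False
        then show ?thesis using fst_ext[OF n_car[OF i]]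
          by (cases "F i") (auto simp: wr_map_def extensional_def)
      qed
    qed
    moreover have "snd (wr_map d pu (F i)) = snd (\<Phi> (n i))" by (simp add: snd_wr_map F_snd)
    ultimately have "wr_map d pu (F i) = \<Phi> (n i)" by (simp add: prod_eq_iff)
    then show ?thesis using ph_s[OF i] pu_s[OF i] by (simp add: s_def')
  qed
  show ?thesis
    using pres_hom_eq[OF WG_group h1[unfolded U_def'] h2[unfolded U_def'] gen] a by (simp add: U_def')
qed

lemma U_ssg: "ssg U d ph" by (intro ssg.intro U_group ph_hom)

lemma U_sect_car: "a \<in> carrier U \<Longrightarrow> v \<in> words d \<Longrightarrow> sect ph a v \<in> carrier U"
  using ssg.sect_car[OF U_ssg] .

lemma sect_pu: "a \<in> carrier U \<Longrightarrow> v \<in> words d \<Longrightarrow> pu (sect ph a v) = sect \<Phi> (pu a) v"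
  using sect_semiconj[OF U_ssg C1] .

lemma sect_s: "i < l \<Longrightarrow> v \<in> words d \<Longrightarrow> \<exists>m<l. sect ph (s i) v = s m"
proof (induction v arbitrary: i)
  case Nil then show ?case by auto
next
  case (Cons x w)
  have "fst (ph (s i)) x = s (nx i x)" using Cons.prems by (simp add: ph_s F_fst)
  then show ?case using Cons nidx by simp
qed

lemma sect_s_n: "i < l \<Longrightarrow> v \<in> words d \<Longrightarrow> sect ph (s i) v = s m \<Longrightarrow> m < l \<Longrightarrow> n m = sect \<Phi> (n i) v"
  using sect_pu[OF s_car] pu_s by metis

abbreviation "EE \<equiv> E_set G d \<Phi> n l h"
abbreviation "HH \<equiv> H_std G d \<Phi> n l h"
abbreviation "Q \<equiv> G0_std G d \<Phi> n l h"
abbreviation "p1 \<equiv> phi_1 G d \<Phi> n l h"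
abbreviation proj where "proj a \<equiv> HH #>\<^bsub>U\<^esub> a"

definition ww where "ww x i = sect ph (h x i) [x] \<otimes>\<^bsub>U\<^esub> inv\<^bsub>U\<^esub> (s i)"

lemma ww_car: "x < d \<Longrightarrow> i < l \<Longrightarrow> ww x i \<in> carrier U"
  unfolding ww_def using U_sect_car[OF h_car, of x i "[x]"] s_car by simp

lemma EE_eq: "EE = {sect ph (ww x i) v | x i v. x < d \<and> i < l \<and> v \<in> words d}"
  by (simp add: E_set_def ww_def)

lemma E_car: "EE \<subseteq> carrier U"
  using U_sect_car ww_car by (auto simp: EE_eq)

lemma pu_gh: "group_hom U G pu"
  using pu_hom by (intro group_hom.intro group_hom_axioms.intro U_group grp)

lemma ww_pu: "x < d \<Longrightarrow> i < l \<Longrightarrow> pu (ww x i) = \<one>\<^bsub>G\<^esub>"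
proof -
  assume x: "x < d" and i: "i < l"
  have "pu (ww x i) = pu (sect ph (h x i) [x]) \<otimes>\<^bsub>G\<^esub> inv\<^bsub>G\<^esub> (pu (s i))"
    unfolding ww_def using pu_hom h_car[OF x i] s_car[OF i] U_sect_car[OF h_car[OF x i], of "[x]"] x
    by (simp add: group_hom.hom_mult[OF pu_gh] group_hom.hom_inv[OF pu_gh])
  also have "\<dots> = n i \<otimes>\<^bsub>G\<^esub> inv\<^bsub>G\<^esub> (n i)"
    using sect_pu[OF h_car[OF x i], of "[x]"] x h_sec[OF x i] pu_s[OF i] by simp
  finally show ?thesis using n_car[OF i] by simp
qed

lemma E_pu: "e \<in> EE \<Longrightarrow> pu e = \<one>\<^bsub>G\<^esub>"
  using sect_pu ww_car ww_pu sect_one by (auto simp: EE_eq)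

lemma E_sect: "e \<in> EE \<Longrightarrow> y < d \<Longrightarrow> fst (ph e) y \<in> EE"
proof -
  assume e: "e \<in> EE" and y: "y < d"
  then obtain x i v where xiv: "x < d" "i < l" "v \<in> words d" "e = sect ph (ww x i) v"
    by (auto simp: EE_eq)
  have "fst (ph e) y = sect ph (ww x i) (v @ [y])" using xiv by (simp add: sect_append)
  moreover have "v @ [y] \<in> words d" using xiv y by simp
  ultimately show ?thesis using xiv unfolding EE_eq by blast
qed

lemma E_snd: "e \<in> EE \<Longrightarrow> snd (ph e) = id"
proof -
  assume e: "e \<in> EE"
  have "snd (ph e) = snd (wr_map d pu (ph e))" by (simp add: snd_wr_map)
  also have "\<dots> = snd (\<Phi> (pu e))" using C1 e E_car by auto
  finally show ?thesis using E_pu[OF e] snd_one by simp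
qed

lemma HH_def': "HH = generate U (\<Union>g\<in>carrier U. (\<lambda>e. g \<otimes>\<^bsub>U\<^esub> e \<otimes>\<^bsub>U\<^esub> inv\<^bsub>U\<^esub> g) ` EE)"
  by (simp add: H_std_def normal_closure_def)

lemma HH_normal: "normal HH U"
  unfolding HH_def'
proof (rule U.normal_generateI)
  show "(\<Union>g\<in>carrier U. (\<lambda>e. g \<otimes>\<^bsub>U\<^esub> e \<otimes>\<^bsub>U\<^esub> inv\<^bsub>U\<^esub> g) ` EE) \<subseteq> carrier U"
    using E_car by auto
next
  fix x g assume x: "x \<in> (\<Union>g\<in>carrier U. (\<lambda>e. g \<otimes>\<^bsub>U\<^esub> e \<otimes>\<^bsub>U\<^esub> inv\<^bsub>U\<^esub> g) ` EE)" and g: "g \<in> carrier U"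
  then obtain g' e where ge: "g' \<in> carrier U" "e \<in> EE" "x = g' \<otimes>\<^bsub>U\<^esub> e \<otimes>\<^bsub>U\<^esub> inv\<^bsub>U\<^esub> g'" by auto
  have ec: "e \<in> carrier U" using ge E_car by auto
  have "g \<otimes>\<^bsub>U\<^esub> x \<otimes>\<^bsub>U\<^esub> inv\<^bsub>U\<^esub> g = (g \<otimes>\<^bsub>U\<^esub> g') \<otimes>\<^bsub>U\<^esub> e \<otimes>\<^bsub>U\<^esub> inv\<^bsub>U\<^esub> (g \<otimes>\<^bsub>U\<^esub> g')"
    using ge g ec by (simp add: U.m_assoc U.inv_mult_group)
  then show "g \<otimes>\<^bsub>U\<^esub> x \<otimes>\<^bsub>U\<^esub> inv\<^bsub>U\<^esub> g \<in> (\<Union>g\<in>carrier U. (\<lambda>e. g \<otimes>\<^bsub>U\<^esub> e \<otimes>\<^bsub>U\<^esub> inv\<^bsub>U\<^esub> g) ` EE)"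
    using ge g by auto
qed

lemma HH_sub:
  assumes Y: "normal Y U" and E: "EE \<subseteq> Y"
  shows "HH \<subseteq> Y"
  unfolding HH_def'
proof (rule U.generate_subgroup_incl)
  show "subgroup Y U" using Y by (simp add: normal_def)
  show "(\<Union>g\<in>carrier U. (\<lambda>e. g \<otimes>\<^bsub>U\<^esub> e \<otimes>\<^bsub>U\<^esub> inv\<^bsub>U\<^esub> g) ` EE) \<subseteq> Y"
    using Y E U.normal_inv_iff by blast
qed

lemma E_HH: "EE \<subseteq> HH"
proof
  fix e assume e: "e \<in> EE"
  then have "e = \<one>\<^bsub>U\<^esub> \<otimes>\<^bsub>U\<^esub> e \<otimes>\<^bsub>U\<^esub> inv\<^bsub>U\<^esub> \<one>\<^bsub>U\<^esub>" using E_car by auto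
  then have "e \<in> (\<Union>g\<in>carrier U. (\<lambda>e. g \<otimes>\<^bsub>U\<^esub> e \<otimes>\<^bsub>U\<^esub> inv\<^bsub>U\<^esub> g) ` EE)" using e by blast
  then show "e \<in> HH" unfolding HH_def' by (rule generate.incl)
qed

lemma HH_subgroup: "subgroup HH U" using HH_normal by (simp add: normal_def)
lemma HH_sub_car: "HH \<subseteq> carrier U" using HH_subgroup by (simp add: subgroup.subset)

lemma Q_def': "Q = U Mod HH" by (simp add: G0_std_def)
lemma Q_group: "group Q" unfolding Q_def' using HH_normal by (rule normal.factorgroup_is_group)
interpretation Q: group Q by (rule Q_group)
lemma WQ_group: "group (wreath Q d)" by (rule wreath_group[OF Q_group])
interpretation WQ: group "wreath Q d" by (rule WQ_group)

lemma Q_one: "\<one>\<^bsub>Q\<^esub> = HH" by (simp add: Q_def' FactGroup_def)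
lemma Q_carrier: "carrier Q = rcosets\<^bsub>U\<^esub> HH" by (simp add: Q_def' FactGroup_def)
lemma proj_hom: "(\<lambda>a. proj a) \<in> hom U Q"
  unfolding Q_def' using HH_normal by (rule normal.r_coset_hom_Mod)
lemma proj_car: "a \<in> carrier U \<Longrightarrow> proj a \<in> carrier Q"
  using proj_hom by (auto simp: hom_def)
lemma proj_mult: "a \<in> carrier U \<Longrightarrow> b \<in> carrier U \<Longrightarrow> proj (a \<otimes>\<^bsub>U\<^esub> b) = proj a \<otimes>\<^bsub>Q\<^esub> proj b"
  using proj_hom by (auto simp: hom_def)
lemma Q_cases: "C \<in> carrier Q \<Longrightarrow> \<exists>a\<in>carrier U. C = proj a"
  by (auto simp: Q_carrier RCOSETS_def)
lemma proj_HH: "a \<in> HH \<Longrightarrow> proj a = HH"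
  using subgroup.rcos_const[OF HH_subgroup U_group] .
lemma proj_self: "a \<in> carrier U \<Longrightarrow> a \<in> proj a"
  using U.rcos_self[OF _ HH_subgroup] .

lemma quot_wr_eq: "quot_wr G d \<Phi> n l h = wr_map d (\<lambda>a. proj a)"
  by (simp add: quot_wr_def wr_map_def)

abbreviation "phq a \<equiv> wr_map d (\<lambda>a. proj a) (ph a)"

lemma phq_hom: "(\<lambda>a. phq a) \<in> hom U (wreath Q d)"
  by (rule hom_comp[OF ph_hom wr_map_hom[OF proj_hom]])

lemma phq_gh: "group_hom U (wreath Q d) (\<lambda>a. phq a)"
  using phq_hom by (intro group_hom.intro group_hom_axioms.intro U_group WQ_group)


lemma HH_ker_pu: "HH \<subseteq> kernel U G pu"
  using E_pu E_car by (intro HH_sub group_hom.normal_kernel[OF pu_gh]) (auto simp: kernel_def)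

lemma HH_ker_phq: "HH \<subseteq> kernel U (wreath Q d) (\<lambda>a. phq a)"
proof (intro HH_sub group_hom.normal_kernel[OF phq_gh] subsetI)
  fix e assume e: "e \<in> EE"
  have "phq e = \<one>\<^bsub>wreath Q d\<^esub>"
  proof -
    have "fst (phq e) = (\<lambda>x\<in>{0..<d}. \<one>\<^bsub>Q\<^esub>)"
    proof
      fix x show "fst (phq e) x = (\<lambda>x\<in>{0..<d}. \<one>\<^bsub>Q\<^esub>) x"
        using E_sect[OF e, of x] E_HH proj_HH Q_one
        by (cases "ph e") (auto simp: wr_map_def)
    qed
    moreover have "snd (phq e) = id" using E_snd[OF e] by (simp add: snd_wr_map)
    ultimately show ?thesis by (simp add: wreath_one prod_eq_iff)
  qed
  then show "e \<in> kernel U (wreath Q d) (\<lambda>a. phq a)" using e E_car by (auto simp: kernel_def)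
qed

lemma ker_coset:
  assumes gh: "group_hom U K f" and ker: "HH \<subseteq> kernel U K f"
    and a: "a \<in> carrier U" and b: "b \<in> proj a"
  shows "f b = f a"
proof -
  obtain x where x: "x \<in> HH" "b = x \<otimes>\<^bsub>U\<^esub> a" using b by (auto simp: r_coset_def)
  have "f x = \<one>\<^bsub>K\<^esub>" "x \<in> carrier U" using x ker by (auto simp: kernel_def)
  then show ?thesis using x a group_hom.hom_mult[OF gh] group_hom.hom_closed[OF gh] gh
    by (simp add: group_hom_def group.is_monoid monoid.l_one)
qed

lemma pu_coset: "a \<in> carrier U \<Longrightarrow> b \<in> proj a \<Longrightarrow> pu b = pu a"
  using ker_coset[OF pu_gh HH_ker_pu] .
lemma phq_coset: "a \<in> carrier U \<Longrightarrow> b \<in> proj a \<Longrightarrow> phq b = phq a"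
  using ker_coset[OF phq_gh HH_ker_phq] by blast

lemma some_coset: "a \<in> carrier U \<Longrightarrow> (SOME b. b \<in> proj a) \<in> proj a"
  using proj_self by (rule someI)

lemma p1_proj: "a \<in> carrier U \<Longrightarrow> p1 (proj a) = phq a"
  unfolding phi_1_def quot_wr_eq using phq_coset some_coset by blast

lemma pi_std_proj: "a \<in> carrier U \<Longrightarrow> pi_std G n (proj a) = pu a"
  unfolding pi_std_def using pu_coset some_coset by blast

lemma phq_car: "a \<in> carrier U \<Longrightarrow> phq a \<in> carrier (wreath Q d)"
  using phq_hom by (auto simp: hom_def)

lemma p1_hom: "p1 \<in> hom Q (wreath Q d)"
proof (rule homI)
  fix C assume "C \<in> carrier Q"
  then obtain a where "a \<in> carrier U" "C = proj a" using Q_cases by blast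
  then show "p1 C \<in> carrier (wreath Q d)" using p1_proj phq_car by simp
next
  fix C D assume "C \<in> carrier Q" "D \<in> carrier Q"
  then obtain a b where ab: "a \<in> carrier U" "C = proj a" "b \<in> carrier U" "D = proj b" using Q_cases by metis
  then have "C \<otimes>\<^bsub>Q\<^esub> D = proj (a \<otimes>\<^bsub>U\<^esub> b)" using proj_mult by simp
  then show "p1 (C \<otimes>\<^bsub>Q\<^esub> D) = p1 C \<otimes>\<^bsub>wreath Q d\<^esub> p1 D"
    using ab p1_proj phq_hom by (simp add: hom_def)
qed

lemma claim1: "\<forall>a\<in>carrier U. p1 (proj a) = quot_wr G d \<Phi> n l h (ph a)"
  using p1_proj quot_wr_eq by simp

lemma claim2: "self_similar Q d p1"
  using Q_group p1_hom by (simp add: self_similar_def)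

lemma claim7: "\<forall>C\<in>carrier Q. wr_map d (pi_std G n) (p1 C) = \<Phi> (pi_std G n C)"
proof
  fix C assume "C \<in> carrier Q"
  then obtain a where a: "a \<in> carrier U" "C = proj a" using Q_cases by blast
  have "wr_map d (pi_std G n) (phq a) = wr_map d pu (ph a)"
  proof -
    have "fst (wr_map d (pi_std G n) (phq a)) = fst (wr_map d pu (ph a))"
    proof
      fix x show "fst (wr_map d (pi_std G n) (phq a)) x = fst (wr_map d pu (ph a)) x"
        using ssg.fst_car[OF U_ssg a(1), of x] pi_std_proj
        by (cases "x < d") (auto simp: fst_wr_map wr_map_def split: prod.splits)
    qed
    then show ?thesis by (simp add: prod_eq_iff snd_wr_map)
  qed
  then show "wr_map d (pi_std G n) (p1 C) = \<Phi> (pi_std G n C)"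
    using a p1_proj pi_std_proj C1 by simp
qed

end


lemma word_eval_subgroup:
  assumes "group K" "subgroup T K" "\<And>i. i \<in> fst ` set w \<Longrightarrow> f i \<in> T"
  shows "word_eval K f w \<in> T"
  using assms(3)
proof (induction w)
  case Nil then show ?case using assms(2) by (simp add: subgroup.one_closed)
next
  case (Cons x w)
  obtain i b where x: "x = (i,b)" by (cases x)
  have "f i \<in> T" using Cons.prems x by auto
  moreover have "word_eval K f w \<in> T" using Cons by auto
  ultimately show ?case using x assms(1,2)
    by (auto simp: subgroup.m_closed subgroup.m_inv_closed)
qed

lemma sum_ge: "finite A \<Longrightarrow> a \<in> A \<Longrightarrow> (f a :: nat) \<le> sum f A"
  by (rule member_le_sum) auto

context main begin

interpretation G: group G by (rule grp)
interpretation U: group U by (rule U_group)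
interpretation Q: group Q by (rule Q_group)
interpretation WQ: group "wreath Q d" by (rule WQ_group)

lemma U_all_word: "a \<in> carrier U \<Longrightarrow> \<exists>w. valid_word l w \<and> a = word_eval U s w"
proof -
  have "s = pres_gen l RR" by (simp add: fun_eq_iff s_def')
  then show "a \<in> carrier U \<Longrightarrow> ?thesis" using pres_carrier_word[of a l RR] by (simp add: U_def')
qed

section \<open>Self-replicating\<close>

lemma p1_gh: "group_hom Q (wreath Q d) p1"
  using p1_hom by (intro group_hom.intro group_hom_axioms.intro Q_group WQ_group)

lemma claim4: "self_replicating Q d p1"
  unfolding self_replicating_def
proof (intro ballI allI impI)
  fix C x assume C: "C \<in> carrier Q" and x: "x < d"
  define T where "T = {C \<in> carrier Q. \<exists>D\<in>carrier Q. snd (p1 D) x = x \<and> fst (p1 D) x = C}"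
  have sub: "subgroup T Q"
  proof (rule Q.subgroupI)
    show "T \<subseteq> carrier Q" by (auto simp: T_def)
  next
    have "p1 \<one>\<^bsub>Q\<^esub> = \<one>\<^bsub>wreath Q d\<^esub>" using group_hom.hom_one[OF p1_gh] .
    then have "\<one>\<^bsub>Q\<^esub> \<in> T" using x by (auto simp: T_def wreath_one intro!: bexI[of _ "\<one>\<^bsub>Q\<^esub>"])
    then show "T \<noteq> {}" by auto
  next
    fix a assume "a \<in> T"
    then obtain D where D: "a \<in> carrier Q" "D \<in> carrier Q" "snd (p1 D) x = x" "fst (p1 D) x = a"
      by (auto simp: T_def)
    define w where "w = p1 D"
    have w: "w \<in> carrier (wreath Q d)" using D p1_hom by (auto simp: w_def hom_def)
    define w' where "w' = inv\<^bsub>wreath Q d\<^esub> w"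
    have w': "w' \<in> carrier (wreath Q d)" using w by (simp add: w'_def)
    have ww: "w \<otimes>\<^bsub>wreath Q d\<^esub> w' = \<one>\<^bsub>wreath Q d\<^esub>" using w by (simp add: w'_def)
    have "fst w x \<otimes>\<^bsub>Q\<^esub> fst w' (snd w x) = \<one>\<^bsub>Q\<^esub>"
      using arg_cong[OF ww, of "\<lambda>z. fst z x"] x by (simp add: wreath_mult wreath_one)
    then have e1: "a \<otimes>\<^bsub>Q\<^esub> fst w' x = \<one>\<^bsub>Q\<^esub>" using D by (simp add: w_def)
    have fc: "fst w' x \<in> carrier Q" using w' x by (auto simp: wreath_carrier PiE_iff)
    have "fst w' x = inv\<^bsub>Q\<^esub> a" using e1 fc D(1) Q.inv_char Q.inv_comm by metis
    moreover have "snd w' x = x"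
    proof -
      have "(snd w' \<circ> snd w) x = x" using arg_cong[OF ww, of "\<lambda>z. snd z x"] by (simp add: wreath_mult wreath_one)
      then show ?thesis using D by (simp add: w_def)
    qed
    moreover have "p1 (inv\<^bsub>Q\<^esub> D) = w'" using group_hom.hom_inv[OF p1_gh D(2)] by (simp add: w_def w'_def)
    ultimately show "inv\<^bsub>Q\<^esub> a \<in> T" using D by (auto simp: T_def intro!: bexI[of _ "inv\<^bsub>Q\<^esub> D"])
  next
    fix a b assume "a \<in> T" "b \<in> T"
    then obtain D1 D2 where D: "a \<in> carrier Q" "D1 \<in> carrier Q" "snd (p1 D1) x = x" "fst (p1 D1) x = a"
      "b \<in> carrier Q" "D2 \<in> carrier Q" "snd (p1 D2) x = x" "fst (p1 D2) x = b"
      by (auto simp: T_def)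
    have "p1 (D1 \<otimes>\<^bsub>Q\<^esub> D2) = p1 D1 \<otimes>\<^bsub>wreath Q d\<^esub> p1 D2" using p1_hom D by (simp add: hom_def)
    then have "snd (p1 (D1 \<otimes>\<^bsub>Q\<^esub> D2)) x = x" "fst (p1 (D1 \<otimes>\<^bsub>Q\<^esub> D2)) x = a \<otimes>\<^bsub>Q\<^esub> b"
      using D x by (simp_all add: wreath_mult)
    then show "a \<otimes>\<^bsub>Q\<^esub> b \<in> T" using D by (auto simp: T_def intro!: bexI[of _ "D1 \<otimes>\<^bsub>Q\<^esub> D2"])
  qed
  have gen: "proj (s i) \<in> T" if i: "i < l" for i
  proof -
    have hc: "h x i \<in> carrier U" using h_car x i by simp
    have D: "proj (h x i) \<in> carrier Q" using proj_car hc by simp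
    have "snd (p1 (proj (h x i))) = snd (ph (h x i))" using p1_proj hc by (simp add: snd_wr_map)
    also have "\<dots> = snd (wr_map d pu (ph (h x i)))" by (simp add: snd_wr_map)
    also have "\<dots> = snd (\<Phi> (pu (h x i)))" using C1 hc by simp
    finally have snd: "snd (p1 (proj (h x i))) x = x" using h_fix x i by simp
    have sc: "sect ph (h x i) [x] \<in> carrier U" using U_sect_car[OF hc, of "[x]"] x by simp
    have "ww x i = sect ph (ww x i) [] \<and> x < d \<and> i < l \<and> [] \<in> words d" using x i by simp
    then have "ww x i \<in> EE" unfolding EE_eq by blast
    then have wH: "ww x i \<in> HH" using E_HH by auto
    have "sect ph (h x i) [x] = ww x i \<otimes>\<^bsub>U\<^esub> s i"
      using sc s_car[OF i] by (simp add: ww_def U.m_assoc)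
    then have "proj (sect ph (h x i) [x]) = proj (ww x i) \<otimes>\<^bsub>Q\<^esub> proj (s i)"
      using proj_mult ww_car s_car x i by simp
    also have "\<dots> = proj (s i)" using proj_HH[OF wH] Q_one[symmetric] Q.l_one[OF proj_car[OF s_car[OF i]]] by simp
    finally have "fst (p1 (proj (h x i))) x = proj (s i)"
      using p1_proj hc x by (simp add: fst_wr_map)
    then show ?thesis using snd D proj_car s_car i by (auto simp: T_def)
  qed
  obtain a where a: "a \<in> carrier U" "C = proj a" using Q_cases C by blast
  obtain w where w: "valid_word l w" "a = word_eval U s w" using U_all_word a(1) by blast
  have g: "\<And>i. i \<in> fst ` set w \<Longrightarrow> s i \<in> carrier U" using w(1) s_car by (auto simp: valid_word_def)
  have "C = word_eval Q (\<lambda>i. proj (s i)) w"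
    using hom_word_eval[OF U_group Q_group proj_hom g] a w by simp
  also have "\<dots> \<in> T" using w(1) gen by (intro word_eval_subgroup[OF Q_group sub]) (auto simp: valid_word_def)
  finally show "\<exists>D\<in>carrier Q. snd (p1 D) x = x \<and> fst (p1 D) x = C" by (auto simp: T_def)
qed

end


context main begin

interpretation G: group G by (rule grp)
interpretation U: group U by (rule U_group)
interpretation Q: group Q by (rule Q_group)

lemma one_s: "\<exists>j<l. s j = \<one>\<^bsub>U\<^esub>"
  using N_ex[OF one_in_N] rel1 by blast

lemma inv_s: "i < l \<Longrightarrow> \<exists>j<l. inv\<^bsub>U\<^esub> (s i) = s j"
proof -
  assume i: "i < l"
  obtain j where j: "j < l" "n j = inv\<^bsub>G\<^esub> (n i)" using N_ex[OF N_inv[OF n_N[OF i]]] by blast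
  have "n i \<otimes>\<^bsub>G\<^esub> n j = \<one>\<^bsub>G\<^esub>" using j n_car[OF i] by simp
  then have "s i \<otimes>\<^bsub>U\<^esub> s j = \<one>\<^bsub>U\<^esub>" using rel2 i j by blast
  then have "s j \<otimes>\<^bsub>U\<^esub> s i = \<one>\<^bsub>U\<^esub>" using U.inv_comm s_car i j by blast
  then show ?thesis using U.inv_equality s_car i j by blast
qed

lemma pair_s:
  assumes a: "a < l" and b: "b < l" and m: "m < l" and e: "n a \<otimes>\<^bsub>G\<^esub> n b = n m"
  shows "s a \<otimes>\<^bsub>U\<^esub> s b = s m"
proof -
  obtain c where c: "c < l" "n c = inv\<^bsub>G\<^esub> (n m)" using N_ex[OF N_inv[OF n_N[OF m]]] by blast
  have "n a \<otimes>\<^bsub>G\<^esub> n b \<otimes>\<^bsub>G\<^esub> n c = \<one>\<^bsub>G\<^esub>" using e c n_car m by simp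
  then have 1: "s a \<otimes>\<^bsub>U\<^esub> (s b \<otimes>\<^bsub>U\<^esub> s c) = \<one>\<^bsub>U\<^esub>" using rel3 a b c by blast
  have "n c \<otimes>\<^bsub>G\<^esub> n m = \<one>\<^bsub>G\<^esub>" using c n_car m by simp
  then have 2: "s c \<otimes>\<^bsub>U\<^esub> s m = \<one>\<^bsub>U\<^esub>" using rel2 c m by blast
  have "s a \<otimes>\<^bsub>U\<^esub> s b = (s a \<otimes>\<^bsub>U\<^esub> s b) \<otimes>\<^bsub>U\<^esub> (s c \<otimes>\<^bsub>U\<^esub> s m)"
    using 2 s_car a b by simp
  also have "\<dots> = (s a \<otimes>\<^bsub>U\<^esub> (s b \<otimes>\<^bsub>U\<^esub> s c)) \<otimes>\<^bsub>U\<^esub> s m"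
    using s_car a b c m by (simp add: U.m_assoc)
  finally show ?thesis using 1 s_car m by simp
qed

definition prodl :: "nat list \<Rightarrow> gword set" where
  "prodl js = foldr (\<lambda>j acc. s j \<otimes>\<^bsub>U\<^esub> acc) js \<one>\<^bsub>U\<^esub>"

lemma prodl_simps[simp]: "prodl [] = \<one>\<^bsub>U\<^esub>" "prodl (j # js) = s j \<otimes>\<^bsub>U\<^esub> prodl js"
  by (simp_all add: prodl_def)

lemma prodl_car: "set js \<subseteq> {0..<l} \<Longrightarrow> prodl js \<in> carrier U"
  by (induction js) (auto simp: s_car)

lemma all_prodl: "a \<in> carrier U \<Longrightarrow> \<exists>js. set js \<subseteq> {0..<l} \<and> a = prodl js"
proof -
  assume "a \<in> carrier U"
  then obtain w where w: "valid_word l w" "a = word_eval U s w" using U_all_word by blast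
  have "valid_word l w \<Longrightarrow> \<exists>js. set js \<subseteq> {0..<l} \<and> word_eval U s w = prodl js"
  proof (induction w)
    case Nil then show ?case by (intro exI[of _ "[]"]) simp
  next
    case (Cons x w)
    obtain i b where x: "x = (i,b)" by (cases x)
    have i: "i < l" and vw: "valid_word l w" using Cons.prems x by auto
    obtain js where js: "set js \<subseteq> {0..<l}" "word_eval U s w = prodl js" using Cons.IH vw by blast
    obtain j where j: "j < l" "(if b then s i else inv\<^bsub>U\<^esub> (s i)) = s j"
      using inv_s[OF i] i by (cases b) auto
    show ?case using js j x by (intro exI[of _ "j # js"]) simp
  qed
  then show ?thesis using w by blast
qed

lemma sect_prodl:
  "set js \<subseteq> {0..<l} \<Longrightarrow> v \<in> words d \<Longrightarrow>
    \<exists>js'. length js' = length js \<and> set js' \<subseteq> {0..<l} \<and> sect ph (prodl js) v = prodl js'"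
proof (induction js arbitrary: v)
  case Nil then show ?case using ssg.sect_one[OF U_ssg] by (intro exI[of _ "[]"]) simp
next
  case (Cons j js)
  have j: "j < l" and js: "set js \<subseteq> {0..<l}" using Cons.prems by auto
  have sm: "sect ph (s j \<otimes>\<^bsub>U\<^esub> prodl js) v = sect ph (s j) v \<otimes>\<^bsub>U\<^esub> sect ph (prodl js) (act ph (s j) v)"
    using ssg.sect_mult[OF U_ssg s_car[OF j] prodl_car[OF js] Cons.prems(2)] .
  obtain m where m: "m < l" "sect ph (s j) v = s m" using sect_s[OF j Cons.prems(2)] by blast
  have av: "act ph (s j) v \<in> words d" using ssg.act_words[OF U_ssg s_car[OF j] Cons.prems(2)] by simp
  obtain js' where js': "length js' = length js" "set js' \<subseteq> {0..<l}" "sect ph (prodl js) (act ph (s j) v) = prodl js'"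
    using Cons.IH[OF js av] by blast
  show ?case using sm m js' by (intro exI[of _ "m # js'"]) simp
qed

lemma pairK: "\<exists>K0. \<forall>a<l. \<forall>b<l. \<forall>v\<in>words d. length v \<ge> K0 \<longrightarrow> (\<exists>m<l. sect ph (s a \<otimes>\<^bsub>U\<^esub> s b) v = s m)"
proof -
  have "\<forall>p\<in>{0..<l} \<times> {0..<l}. \<exists>k. \<forall>v\<in>words d. length v \<ge> k \<longrightarrow> (\<exists>m<l. sect ph (s (fst p) \<otimes>\<^bsub>U\<^esub> s (snd p)) v = s m)"
  proof
    fix p assume "p \<in> {0..<l} \<times> {0..<l}"
    then obtain a b where ab: "p = (a,b)" "a < l" "b < l" by auto
    have nab: "n a \<otimes>\<^bsub>G\<^esub> n b \<in> carrier G" using n_car ab by simp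
    obtain k where k: "\<forall>v\<in>words d. length v \<ge> k \<longrightarrow> sect \<Phi> (n a \<otimes>\<^bsub>G\<^esub> n b) v \<in> N"
      using N_contr[OF nab] by blast
    have "\<forall>v\<in>words d. length v \<ge> k \<longrightarrow> (\<exists>m<l. sect ph (s a \<otimes>\<^bsub>U\<^esub> s b) v = s m)"
    proof (intro ballI impI)
      fix v assume v: "v \<in> words d" "length v \<ge> k"
      have pr: "prodl [a,b] = s a \<otimes>\<^bsub>U\<^esub> s b" using s_car ab by simp
      have ab2: "set [a,b] \<subseteq> {0..<l}" using ab by auto
      obtain js' where js': "length js' = length [a,b]" "set js' \<subseteq> {0..<l}" "sect ph (prodl [a,b]) v = prodl js'"
        using sect_prodl[OF ab2 v(1)] by blast
      then obtain a' b' where a'b': "js' = [a',b']" "a' < l" "b' < l"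
        by (cases js'; cases "tl js'") auto
      have sab: "sect ph (s a \<otimes>\<^bsub>U\<^esub> s b) v = s a' \<otimes>\<^bsub>U\<^esub> s b'"
        using js' a'b' pr s_car by simp
      have "pu (sect ph (s a \<otimes>\<^bsub>U\<^esub> s b) v) = sect \<Phi> (pu (s a \<otimes>\<^bsub>U\<^esub> s b)) v"
        using sect_pu s_car ab v by simp
      also have "pu (s a \<otimes>\<^bsub>U\<^esub> s b) = n a \<otimes>\<^bsub>G\<^esub> n b"
        using group_hom.hom_mult[OF pu_gh] s_car pu_s ab by simp
      finally have "n a' \<otimes>\<^bsub>G\<^esub> n b' = sect \<Phi> (n a \<otimes>\<^bsub>G\<^esub> n b) v"
        using sab group_hom.hom_mult[OF pu_gh] s_car pu_s a'b' by simp
      then have "n a' \<otimes>\<^bsub>G\<^esub> n b' \<in> N" using k v by simp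
      then obtain m where m: "m < l" "n m = n a' \<otimes>\<^bsub>G\<^esub> n b'" using N_ex by blast
      then have "s a' \<otimes>\<^bsub>U\<^esub> s b' = s m" using pair_s a'b' by simp
      then show "\<exists>m<l. sect ph (s a \<otimes>\<^bsub>U\<^esub> s b) v = s m" using sab m by blast
    qed
    then show "\<exists>k. \<forall>v\<in>words d. length v \<ge> k \<longrightarrow> (\<exists>m<l. sect ph (s (fst p) \<otimes>\<^bsub>U\<^esub> s (snd p)) v = s m)"
      using ab by auto
  qed
  then obtain kf where kf: "\<forall>p\<in>{0..<l} \<times> {0..<l}. \<forall>v\<in>words d. length v \<ge> kf p \<longrightarrow> (\<exists>m<l. sect ph (s (fst p) \<otimes>\<^bsub>U\<^esub> s (snd p)) v = s m)"
    by metis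
  show ?thesis
  proof (rule exI[of _ "sum kf ({0..<l} \<times> {0..<l})"], intro allI impI ballI)
    fix a b v assume ab: "a < l" "b < l" and v: "v \<in> words d" "sum kf ({0..<l} \<times> {0..<l}) \<le> length v"
    have "kf (a,b) \<le> sum kf ({0..<l} \<times> {0..<l})" using ab by (intro sum_ge) auto
    then show "\<exists>m<l. sect ph (s a \<otimes>\<^bsub>U\<^esub> s b) v = s m" using kf ab v by fastforce
  qed
qed

lemma contr_prodl:
  "set js \<subseteq> {0..<l} \<Longrightarrow> \<exists>k. \<forall>v\<in>words d. length v \<ge> k \<longrightarrow> sect ph (prodl js) v \<in> s ` {0..<l}"
proof (induction "length js" arbitrary: js rule: less_induct)
  case less
  show ?case
  proof (cases js)
    case Nil
    obtain j where j: "j < l" "s j = \<one>\<^bsub>U\<^esub>" using one_s by blast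
    show ?thesis using Nil j ssg.sect_one[OF U_ssg] by (intro exI[of _ 0]) force
  next
    case (Cons a rest)
    note js = Cons
    show ?thesis
    proof (cases rest)
      case Nil
      have a: "a < l" using less.prems js by auto
      have "prodl js = s a" using js Nil s_car a by simp
      then show ?thesis using sect_s a by (intro exI[of _ 0]) force
    next
      case (Cons b rest')
      have a: "a < l" and b: "b < l" and r: "set rest' \<subseteq> {0..<l}" using less.prems js Cons by auto
      obtain K0 where K0: "\<forall>a<l. \<forall>b<l. \<forall>v\<in>words d. length v \<ge> K0 \<longrightarrow> (\<exists>m<l. sect ph (s a \<otimes>\<^bsub>U\<^esub> s b) v = s m)"
        using pairK by blast
      define V where "V = {v \<in> words d. length v = K0}"
      have finV: "finite V"
        by (rule finite_subset[OF _ finite_lists_length_eq[OF finite_atLeastLessThan[of 0 d], of K0]])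
           (auto simp: V_def words_def)
      have pj: "prodl js = (s a \<otimes>\<^bsub>U\<^esub> s b) \<otimes>\<^bsub>U\<^esub> prodl rest'"
        using js Cons a b r s_car prodl_car by (simp add: U.m_assoc)
      have "\<forall>v\<in>V. \<exists>k. \<forall>u\<in>words d. length u \<ge> k \<longrightarrow> sect ph (sect ph (prodl js) v) u \<in> s ` {0..<l}"
      proof
        fix v assume v: "v \<in> V"
        then have vw: "v \<in> words d" and vl: "length v = K0" by (auto simp: V_def)
        have "\<exists>m<l. sect ph (s a \<otimes>\<^bsub>U\<^esub> s b) v = s m" using K0 a b vw vl by simp
        then obtain m where m: "m < l" "sect ph (s a \<otimes>\<^bsub>U\<^esub> s b) v = s m" by blast
        have sab: "s a \<otimes>\<^bsub>U\<^esub> s b \<in> carrier U" using s_car a b by simp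
        have av: "act ph (s a \<otimes>\<^bsub>U\<^esub> s b) v \<in> words d" using ssg.act_words[OF U_ssg sab vw] by simp
        obtain js' where js': "length js' = length rest'" "set js' \<subseteq> {0..<l}"
            "sect ph (prodl rest') (act ph (s a \<otimes>\<^bsub>U\<^esub> s b) v) = prodl js'"
          using sect_prodl[OF r av] by blast
        have "sect ph (prodl js) v = prodl (m # js')"
          using pj ssg.sect_mult[OF U_ssg sab prodl_car[OF r] vw] m js' by simp
        moreover have "length (m # js') < length js" using js Cons js' by simp
        moreover have "set (m # js') \<subseteq> {0..<l}" using m js' by simp
        ultimately show "\<exists>k. \<forall>u\<in>words d. length u \<ge> k \<longrightarrow> sect ph (sect ph (prodl js) v) u \<in> s ` {0..<l}"
          using less.hyps by metis
      qed
      then obtain kf where kf: "\<forall>v\<in>V. \<forall>u\<in>words d. length u \<ge> kf v \<longrightarrow> sect ph (sect ph (prodl js) v) u \<in> s ` {0..<l}"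
        by metis
      show ?thesis
      proof (intro exI[of _ "K0 + sum kf V"] ballI impI)
        fix u assume u: "u \<in> words d" "K0 + sum kf V \<le> length u"
        define v1 where "v1 = take K0 u"
        define u2 where "u2 = drop K0 u"
        have uu: "u = v1 @ u2" by (simp add: v1_def u2_def)
        have w: "v1 \<in> words d" "u2 \<in> words d" using u(1) uu by (metis words_append)+
        have v1V: "v1 \<in> V" using w u(2) by (auto simp: V_def v1_def)
        have "kf v1 \<le> sum kf V" using finV v1V by (rule sum_ge)
        then have "length u2 \<ge> kf v1" using u(2) by (simp add: u2_def)
        then have "sect ph (sect ph (prodl js) v1) u2 \<in> s ` {0..<l}" using kf v1V w by blast
        then show "sect ph (prodl js) u \<in> s ` {0..<l}" by (simp add: uu sect_append)
      qed
    qed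
  qed
qed

lemma U_contr: "a \<in> carrier U \<Longrightarrow> \<exists>k. \<forall>v\<in>words d. length v \<ge> k \<longrightarrow> sect ph a v \<in> s ` {0..<l}"
  using all_prodl contr_prodl by blast

lemma sect_proj: "a \<in> carrier U \<Longrightarrow> v \<in> words d \<Longrightarrow> proj (sect ph a v) = sect p1 (proj a) v"
  using sect_semiconj[OF U_ssg, of "\<lambda>a. proj a" p1] p1_proj by simp

abbreviation "S0 \<equiv> (\<lambda>i. proj (s i)) ` {0..<l}"

lemma claim_cs: "contracting_set Q d p1 S0"
  unfolding contracting_set_def
proof (intro conjI ballI)
  show "finite S0" by simp
  show "S0 \<subseteq> carrier Q" using proj_car s_car by auto
next
  fix C assume "C \<in> carrier Q"
  then obtain a where a: "a \<in> carrier U" "C = proj a" using Q_cases by blast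
  obtain k where k: "\<forall>v\<in>words d. length v \<ge> k \<longrightarrow> sect ph a v \<in> s ` {0..<l}" using U_contr[OF a(1)] by blast
  show "\<exists>k. \<forall>v\<in>words d. k \<le> length v \<longrightarrow> sect p1 C v \<in> S0"
    using k a sect_proj by (intro exI[of _ k]) force
qed

lemma claim3: "contracting Q d p1"
  using claim_cs by (auto simp: contracting_def)

lemma claim5: "is_nucleus Q d p1 S0"
  unfolding is_nucleus_def
proof (intro conjI allI impI claim_cs subsetI)
  fix M C assume M: "contracting_set Q d p1 M" and C: "C \<in> S0"
  then obtain i where i: "i < l" "C = proj (s i)" by auto
  have "\<forall>j\<in>{0..<l}. \<exists>k. \<forall>v\<in>words d. length v \<ge> k \<longrightarrow> sect p1 (proj (s j)) v \<in> M"
    using M proj_car s_car by (auto simp: contracting_set_def)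
  then obtain kf where kf: "\<forall>j\<in>{0..<l}. \<forall>v\<in>words d. length v \<ge> kf j \<longrightarrow> sect p1 (proj (s j)) v \<in> M"
    by metis
  obtain m' v where mv: "m' \<in> N" "v \<in> words d" "length v = sum kf {0..<l}" "sect \<Phi> m' v = n i"
    using N_anc[OF n_N[OF i(1)]] by blast
  obtain j where j: "j < l" "n j = m'" using N_ex mv(1) by blast
  obtain m where m: "m < l" "sect ph (s j) v = s m" using sect_s[OF j(1) mv(2)] by blast
  have "n m = n i" using sect_s_n[OF j(1) mv(2) m(2) m(1)] mv j by simp
  then have "m = i" using n_inj m i by blast
  then have "sect p1 (proj (s j)) v = C" using sect_proj[OF s_car[OF j(1)] mv(2)] m i by simp
  moreover have "kf j \<le> length v" using mv j by (simp add: sum_ge)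
  ultimately show "C \<in> M" using kf j mv by auto
qed

end


theorem mainTheorem3:
  fixes G :: "('a,'b) monoid_scheme"
    and \<Phi> :: "'a \<Rightarrow> (nat \<Rightarrow> 'a) \<times> (nat \<Rightarrow> nat)"
    and d l :: nat
    and N :: "'a set"
    and n :: "nat \<Rightarrow> 'a"
    and h :: "nat \<Rightarrow> nat \<Rightarrow> gword set"
  assumes d2: "d \<ge> 2"
    and ss: "self_similar G d \<Phi>"
    and fg: "finitely_generated G"
    and contr: "contracting G d \<Phi>"
    and srep: "self_replicating G d \<Phi>"
    and nuc: "is_nucleus G d \<Phi> N"
    and enum: "bij_betw n {0..<l} N"
    and h_car: "\<And>x i. x < d \<Longrightarrow> i < l \<Longrightarrow> h x i \<in> carrier (G0un G n l)"
    and h_fix: "\<And>x i. x < d \<Longrightarrow> i < l \<Longrightarrow> snd (\<Phi> (pi_un G n (h x i))) x = x"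
    and h_sec: "\<And>x i. x < d \<Longrightarrow> i < l \<Longrightarrow> fst (\<Phi> (pi_un G n (h x i))) x = n i"
  shows "(\<forall>a\<in>carrier (G0un G n l).
            phi_1 G d \<Phi> n l h (H_std G d \<Phi> n l h #>\<^bsub>G0un G n l\<^esub> a)
              = quot_wr G d \<Phi> n l h (phi_un G d \<Phi> n l a))
       \<and> self_similar (G0_std G d \<Phi> n l h) d (phi_1 G d \<Phi> n l h)
       \<and> contracting (G0_std G d \<Phi> n l h) d (phi_1 G d \<Phi> n l h)
       \<and> self_replicating (G0_std G d \<Phi> n l h) d (phi_1 G d \<Phi> n l h)
       \<and> is_nucleus (G0_std G d \<Phi> n l h) d (phi_1 G d \<Phi> n l h)
           ((\<lambda>i. H_std G d \<Phi> n l h #>\<^bsub>G0un G n l\<^esub> s_un G n l i) ` {0..<l})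
       \<and> (\<forall>C\<in>carrier (G0_std G d \<Phi> n l h).
            wr_map d (pi_std G n) (phi_1 G d \<Phi> n l h C) = \<Phi> (pi_std G n C))"
proof -
  interpret M: main G \<Phi> d l N n h
    using d2 ss nuc enum h_car h_fix h_sec by unfold_locales auto
  show ?thesis
    using M.claim1 M.claim2 M.claim3 M.claim4 M.claim5 M.claim7 by blast
qed

end
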